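(* In the setting below, for all $m,n\in\mathbb{Z}$: (1) The automorphism $w=T_1^mT_2^n$ satisfies $(w(\tau_0),w(\tau_1),w(\tau_2))=(\tau_{m,n},\tau_{m+1,n},\tau_{m+1,n+1})$ and $(w(\alpha_0),w(\alpha_1),w(\alpha_2))=(\alpha_0+3m,\alpha_1+3(n-m),\alpha_2-3n)$; the automorphism $w'=T_1^mT_2^ns_1$ satisfies $(w'(\tau_0),w'(\tau_1),w'(\tau_2))=(\tau_{m,n},\tau_{m,n+1},\tau_{m+1,n+1})$ and $(w'(\alpha_0),w'(\alpha_1),w'(\alpha_2))=(\alpha_0+\alpha_1+3n,-\alpha_1+3(m-n),\alpha_1+\alpha_2-3m)$. (2) With $\varphi_i:=\tau_{i+1}'/\tau_{i+1}-\tau_{i+2}'/\tau_{i+2}+x$, $$(w(\varphi_0),w(\varphi_1),w(\varphi_2))=\Big(\frac{\tau_{m,n}\tau_{m+2,n+1}}{\tau_{m+1,n}\tau_{m+1,n+1}},\ \frac{\tau_{m+1,n}\tau_{m,n+1}}{\tau_{m+1,n+1}\tau_{m,n}},\ \frac{\tau_{m+1,n+1}\tau_{m,n-1}}{\tau_{m,n}\tau_{m+1,n}}\Big),$$ $$(w'(\varphi_0),w'(\varphi_1),w'(\varphi_2))=\Big(\frac{\tau_{m,n}\tau_{m+1,n+2}}{\tau_{m,n+1}\tau_{m+1,n+1}},\ \frac{\tau_{m,n+1}\tau_{m+1,n}}{\tau_{m+1,n+1}\tau_{m,n}},\ \frac{\tau_{m+1,n+1}\tau_{m-1,n}}{\t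au_{m,n}\tau_{m,n+1}}\Big).$$
   Context: Indices mod 3. Let $L$ be the field of rational functions over $\mathbb{C}$ in independent indeterminates $\alpha_0,\alpha_1,x,\tau_0,\tau_1,\tau_2,\tau_0',\tau_1',\tau_2'$, with $\alpha_2:=3-\alpha_0-\alpha_1$ and derivation $'$: $\alpha_i'=0$, $x'=1$, $(\tau_i)'=\tau_i'$, $(\tau_i')'=\tau_i(F_i''+(F_i')^2)$ where $F_j'=\tau_j'/\tau_j$ and $F_i''=-x(F_{i+1}'-F_{i+2}')-(F_i'-F_{i+1}')(F_i'-F_{i+2}')-(\alpha_{i+1}-\alpha_{i+2})/3$. The extended affine Weyl group of type $A^{(1)}_2$ acts on $L$ by differential automorphisms $s_0,s_1,s_2,\pi$ with $s_i(x)=\pi(x)=x$, $s_i(\alpha_i)=-\alpha_i$, $s_i(\alpha_j)=\alpha_j+\alpha_i$ ($j\neq i$), $\pi(\alpha_j)=\alpha_{j+1}$, $s_i(\tau_i)=(\tau_{i+1}'\tau_{i+2}-\tau_{i+1}\tau_{i+2}'+x\tau_{i+1}\tau_{i+2})/\tau_i$, $s_i(\tau_j)=\tau_j$ ($j\ne i$), $\pi(\tau_j)=\tau_{j+1}$. Put $T_1=\pi s_2s_1$, $T_2=s_1\pi s_2$ (composition of automorphisms) and $\tau_{m,n}:=T_1^mT_2^n(\tau_0)\in L$ for $m,n\in\mathbb{Z}$. *)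

theory Defs
  imports Complex_Main "HOL-Library.Poly_Mapping" "HOL-Computational_Algebra.Fraction_Field"
begin

datatype var = Al0 | Al1 | Xv | T0 | T1 | T2 | U0 | U1 | U2
  (* alpha_0, alpha_1, x, tau_0, tau_1, tau_2, tau_0', tau_1', tau_2' *)

fun var_idx :: "var \<Rightarrow> nat" where
  "var_idx Al0 = 0" | "var_idx Al1 = 1" | "var_idx Xv = 2"
| "var_idx T0 = 3" | "var_idx T1 = 4" | "var_idx T2 = 5"
| "var_idx U0 = 6" | "var_idx U1 = 7" | "var_idx U2 = 8"

lemma var_idx_inj: "var_idx a = var_idx b \<Longrightarrow> a = b"
  by (cases a; cases b; simp)

instantiation var :: linorder
begin
definition less_eq_var :: "var \<Rightarrow> var \<Rightarrow> bool" where
  "less_eq_var a b \<longleftrightarrow> var_idx a \<le> var_idx b"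
definition less_var :: "var \<Rightarrow> var \<Rightarrow> bool" where
  "less_var a b \<longleftrightarrow> var_idx a < var_idx b"
instance
  by standard (auto simp: less_eq_var_def less_var_def intro: var_idx_inj)
end

lemma UNIV_var: "(UNIV :: var set) = {Al0, Al1, Xv, T0, T1, T2, U0, U1, U2}"
  by (auto intro: var.exhaust)

instance var :: finite
  by standard (simp add: UNIV_var)

type_synonym mono = "var \<Rightarrow>\<^sub>0 nat"
type_synonym mpoly = "mono \<Rightarrow>\<^sub>0 complex"
type_synonym L = "mpoly fract"

definition toL :: "mpoly \<Rightarrow> L" where "toL p = Fract p 1"

definition cL :: "complex \<Rightarrow> L" where
  "cL c = toL (Poly_Mapping.single 0 c)"

definition gen :: "var \<Rightarrow> L" where
  "gen v = toL (Poly_Mapping.single (Poly_Mapping.single v 1) 1)"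

definition xL :: L where "xL = gen Xv"

definition alpha :: "nat \<Rightarrow> L" where
  "alpha i = (if i mod 3 = 0 then gen Al0 else if i mod 3 = 1 then gen Al1
              else 3 - gen Al0 - gen Al1)"

definition tau :: "nat \<Rightarrow> L" where
  "tau i = (if i mod 3 = 0 then gen T0 else if i mod 3 = 1 then gen T1 else gen T2)"

definition taup :: "nat \<Rightarrow> L" where
  "taup i = (if i mod 3 = 0 then gen U0 else if i mod 3 = 1 then gen U1 else gen U2)"

definition rep :: "L \<Rightarrow> mpoly \<times> mpoly" where
  "rep f = (SOME (a, b). b \<noteq> 0 \<and> f = Fract a b)"

definition Fp :: "nat \<Rightarrow> L" where "Fp j = taup j / tau j"

definition Fpp :: "nat \<Rightarrow> L" where
  "Fpp i = - xL * (Fp (i+1) - Fp (i+2)) - (Fp i - Fp (i+1)) * (Fp i - Fp (i+2))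
           - (alpha (i+1) - alpha (i+2)) / 3"

fun dgen :: "var \<Rightarrow> L" where
  "dgen Al0 = 0" | "dgen Al1 = 0" | "dgen Xv = 1"
| "dgen T0 = taup 0" | "dgen T1 = taup 1" | "dgen T2 = taup 2"
| "dgen U0 = tau 0 * (Fpp 0 + (Fp 0)^2)"
| "dgen U1 = tau 1 * (Fpp 1 + (Fp 1)^2)"
| "dgen U2 = tau 2 * (Fpp 2 + (Fp 2)^2)"

definition coeffm :: "mpoly \<Rightarrow> mono \<Rightarrow> complex" where "coeffm p m = Poly_Mapping.lookup p m"
definition expo :: "mono \<Rightarrow> var \<Rightarrow> nat" where "expo m v = Poly_Mapping.lookup m v"

definition pder :: "mpoly \<Rightarrow> L" where
  "pder p = (\<Sum>m::mono\<in>Poly_Mapping.keys p. cL (coeffm p m) *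
      (\<Sum>v::var\<in>UNIV. of_nat (expo m v) *
          (\<Prod>w::var\<in>UNIV. gen w ^ (if w = v then expo m w - 1 else expo m w)) * dgen v))"

definition D :: "L \<Rightarrow> L" where
  "D f = (case rep f of (a, b) \<Rightarrow> (pder a * toL b - toL a * pder b) / (toL b)^2)"

definition peval :: "(var \<Rightarrow> L) \<Rightarrow> mpoly \<Rightarrow> L" where
  "peval \<sigma> p = (\<Sum>m::mono\<in>Poly_Mapping.keys p. cL (coeffm p m) * (\<Prod>v::var\<in>UNIV. \<sigma> v ^ expo m v))"

definition fsubst :: "(var \<Rightarrow> L) \<Rightarrow> L \<Rightarrow> L" where
  "fsubst \<sigma> f = (case rep f of (a, b) \<Rightarrow> peval \<sigma> a / peval \<sigma> b)"

definition mk_aut :: "(nat \<Rightarrow> L) \<Rightarrow> (nat \<Rightarrow> L) \<Rightarrow> L \<Rightarrow> L" where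
  "mk_aut a t = fsubst (\<lambda>v. case v of Al0 \<Rightarrow> a 0 | Al1 \<Rightarrow> a 1 | Xv \<Rightarrow> xL
      | T0 \<Rightarrow> t 0 | T1 \<Rightarrow> t 1 | T2 \<Rightarrow> t 2
      | U0 \<Rightarrow> D (t 0) | U1 \<Rightarrow> D (t 1) | U2 \<Rightarrow> D (t 2))"

definition s :: "nat \<Rightarrow> L \<Rightarrow> L" where
  "s i = mk_aut
     (\<lambda>j. if j mod 3 = i mod 3 then - alpha j else alpha j + alpha i)
     (\<lambda>j. if j mod 3 = i mod 3
          then (taup (i+1) * tau (i+2) - tau (i+1) * taup (i+2) + xL * tau (i+1) * tau (i+2)) / tau i
          else tau j)"

definition pi :: "L \<Rightarrow> L" where
  "pi = mk_aut (\<lambda>j. alpha (j+1)) (\<lambda>j. tau (j+1))"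

definition Tr1 :: "L \<Rightarrow> L" where "Tr1 = pi \<circ> s 2 \<circ> s 1"
definition Tr2 :: "L \<Rightarrow> L" where "Tr2 = s 1 \<circ> pi \<circ> s 2"

definition zpow :: "(L \<Rightarrow> L) \<Rightarrow> int \<Rightarrow> L \<Rightarrow> L" where
  "zpow f k = (if 0 \<le> k then f ^^ nat k else (inv f) ^^ nat (- k))"

definition wmn :: "int \<Rightarrow> int \<Rightarrow> L \<Rightarrow> L" where
  "wmn m n = zpow Tr1 m \<circ> zpow Tr2 n"

definition taumn :: "int \<Rightarrow> int \<Rightarrow> L" where
  "taumn m n = wmn m n (tau 0)"

definition phi :: "nat \<Rightarrow> L" where
  "phi i = taup (i+1) / tau (i+1) - taup (i+2) / tau (i+2) + xL"

end

theory Submission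
  imports Defs
begin


instance fract :: ("{idom,ring_char_0}") ring_char_0
proof
  show "inj (of_nat :: nat \<Rightarrow> 'a fract)"
    by (auto simp: inj_on_def of_nat_fract eq_fract)
qed

lemma toL_add: "toL (a+b) = toL a + toL b" by (simp add: toL_def)
lemma toL_mult: "toL (a*b) = toL a * toL b" by (simp add: toL_def)
lemma toL_minus: "toL (-a) = - toL a" by (simp add: toL_def)
lemma toL_diff: "toL (a-b) = toL a - toL b" by (simp add: toL_def)
lemma toL_0: "toL 0 = 0" by (simp add: toL_def fract_collapse)
lemma toL_1: "toL 1 = 1" by (simp add: toL_def fract_collapse)
lemma toL_eq0: "toL a = 0 \<longleftrightarrow> a = 0"
  by (simp add: toL_def Zero_fract_def eq_fract)
lemma Fract_toL: "b \<noteq> 0 \<Longrightarrow> Fract a b = toL a / toL b"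
  by (simp add: toL_def eq_fract)
lemma L_cases: obtains a b where "b \<noteq> 0" "f = toL a / toL b"
  by (cases f) (auto simp: Fract_toL)
lemma toL_power: "toL (a^n) = toL a ^ n" by (induct n) (simp_all add: toL_1 toL_mult)
lemma toL_prod: "toL (prod f A) = (\<Prod>x\<in>A. toL (f x))"
  by (induct A rule: infinite_finite_induct) (simp_all add: toL_1 toL_mult)
lemma toL_sum: "toL (sum f A) = (\<Sum>x\<in>A. toL (f x))"
  by (induct A rule: infinite_finite_induct) (simp_all add: toL_0 toL_add)

lemma cL_toL: "toL (Poly_Mapping.single 0 c) = cL c" by (simp add: cL_def)
lemma cL_add: "cL (a+b) = cL a + cL b" by (simp add: cL_def single_add toL_add)
lemma cL_mult: "cL (a*b) = cL a * cL b" by (simp add: cL_def toL_mult[symmetric] mult_single)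
lemma cL_0[simp]: "cL 0 = 0" by (simp add: cL_def toL_0)
lemma cL_1[simp]: "cL 1 = 1" by (simp add: cL_def toL_1)
lemma cL_of_nat: "cL (of_nat k) = of_nat k" by (induct k) (simp_all add: cL_add)
lemma cL_of_int: "cL (of_int k) = of_int k"
proof (cases k rule: int_cases)
  case (nonneg n) then show ?thesis by (simp add: cL_of_nat)
next
  case (neg n)
  have "cL (- of_nat (Suc n)) = - cL (of_nat (Suc n))"
    using cL_add[of "- of_nat (Suc n)" "of_nat (Suc n)"] by (simp add: eq_neg_iff_add_eq_0)
  then show ?thesis using neg cL_of_nat[of "Suc n"] by simp
qed
lemma cL_numeral: "cL (numeral k) = numeral k"
  using cL_of_nat[of "numeral k"] by simp

lemma update_eq_add: "k \<notin> Poly_Mapping.keys f \<Longrightarrow> Poly_Mapping.update k v f = f + Poly_Mapping.single k v"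
  by (rule poly_mapping_eqI) (auto simp: lookup_update lookup_add lookup_single in_keys_iff when_def)

lemma mpoly_induct[case_names zero single add]:
  assumes "P 0" "\<And>m c. P (Poly_Mapping.single m c)" "\<And>p q. P p \<Longrightarrow> P q \<Longrightarrow> P (p+q)"
  shows "P (p :: 'a \<Rightarrow>\<^sub>0 'b::monoid_add)"
proof (induct p rule: update_induct)
  case const then show ?case using assms(1) .
next
  case (update f a b) then show ?case using assms(2,3) update_eq_add by metis
qed

definition ev :: "(var \<Rightarrow> L) \<Rightarrow> mono \<Rightarrow> L" where
  "ev \<sigma> m = (\<Prod>v\<in>UNIV. \<sigma> v ^ Poly_Mapping.lookup m v)"

lemma peval_alt: "peval \<sigma> p = (\<Sum>m\<in>Poly_Mapping.keys p. cL (Poly_Mapping.lookup p m) * ev \<sigma> m)"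
  by (simp add: peval_def coeffm_def expo_def ev_def)

lemma peval_add: "peval \<sigma> (p+q) = peval \<sigma> p + peval \<sigma> q"
  unfolding peval_alt
  by (rule setsum_keys_plus_distrib) (simp_all add: cL_add distrib_right)

lemma peval_single: "peval \<sigma> (Poly_Mapping.single m c) = cL c * ev \<sigma> m"
  by (simp add: peval_alt)

lemma peval_0[simp]: "peval \<sigma> 0 = 0" by (simp add: peval_alt)

lemma ev_add: "ev \<sigma> (m1 + m2) = ev \<sigma> m1 * ev \<sigma> m2"
  by (simp add: ev_def lookup_add power_add prod.distrib)

lemma ev_0[simp]: "ev \<sigma> 0 = 1" by (simp add: ev_def)

lemma peval_mult: "peval \<sigma> (p*q) = peval \<sigma> p * peval \<sigma> q"
proof (induct p rule: mpoly_induct)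
  case zero then show ?case by simp
next
  case (single m c)
  show ?case
  proof (induct q rule: mpoly_induct)
    case zero then show ?case by simp
  next
    case (single m' c') then show ?case by (simp add: mult_single peval_single ev_add cL_mult)
  next
    case (add p q) then show ?case by (simp add: distrib_left peval_add)
  qed
next
  case (add p q) then show ?case by (simp add: distrib_right peval_add)
qed

lemma peval_1[simp]: "peval \<sigma> 1 = 1"
  using peval_single[of \<sigma> 0 1] by simp

lemma peval_minus: "peval \<sigma> (-p) = - peval \<sigma> p"
  using peval_add[of \<sigma> "-p" p] by (simp add: eq_neg_iff_add_eq_0)

lemma peval_diff: "peval \<sigma> (p-q) = peval \<sigma> p - peval \<sigma> q"
  using peval_add[of \<sigma> p "-q"] peval_minus[of \<sigma> q] by simp

lemma peval_const: "peval \<sigma> (Poly_Mapping.single 0 c) = cL c"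
  by (simp add: peval_single)

definition X :: "var \<Rightarrow> mpoly" where "X v = Poly_Mapping.single (Poly_Mapping.single v 1) 1"

lemma gen_X: "gen v = toL (X v)" by (simp add: gen_def X_def)

lemma ev_single: "ev \<sigma> (Poly_Mapping.single v 1) = \<sigma> v"
proof -
  have "ev \<sigma> (Poly_Mapping.single v 1) = (\<Prod>w\<in>UNIV. if w = v then \<sigma> v else 1)"
    unfolding ev_def by (rule prod.cong) (auto simp: lookup_single when_def)
  then show ?thesis by simp
qed

lemma peval_X: "peval \<sigma> (X v) = \<sigma> v"
  unfolding X_def peval_single ev_single by simp

lemma X_power: "X v ^ k = Poly_Mapping.single (Poly_Mapping.single v k) 1"
  by (induct k) (simp_all add: X_def mult_single single_add[symmetric] add.commute)

lemma prod_single: "finite A \<Longrightarrow> (\<Prod>v\<in>A. Poly_Mapping.single (f v) (1::complex)) = Poly_Mapping.single (\<Sum>v\<in>A. f v) 1"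
  by (induct A rule: finite_induct) (simp_all add: mult_single)

lemma mono_sum: "(\<Sum>v\<in>(UNIV::var set). Poly_Mapping.single v (Poly_Mapping.lookup m v)) = m"
  by (rule poly_mapping_eqI) (simp add: lookup_sum lookup_single when_def)

lemma single_as_prod: "Poly_Mapping.single m c = Poly_Mapping.single 0 c * (\<Prod>v\<in>UNIV. X v ^ Poly_Mapping.lookup m v)"
  by (simp add: X_power prod_single mono_sum mult_single)

lemma toL_single: "toL (Poly_Mapping.single m c) = cL c * ev gen m"
  by (subst single_as_prod) (simp add: toL_mult toL_prod toL_power cL_toL ev_def gen_X)

lemma toL_peval: "toL p = peval gen p"
  by (induct p rule: mpoly_induct) (simp_all add: toL_0 toL_add peval_add toL_single peval_single)

lemma X_nz: "X v \<noteq> 0"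
proof
  assume "X v = 0"
  then have "Poly_Mapping.lookup (X v) (Poly_Mapping.single v 1) = 0" by simp
  then show False by (simp add: X_def)
qed

lemma gen_nz: "gen v \<noteq> 0"
  by (simp add: gen_X toL_eq0 X_nz)


definition dmon :: "mono \<Rightarrow> L" where
  "dmon m = (\<Sum>v\<in>UNIV. of_nat (Poly_Mapping.lookup m v) *
          (\<Prod>w\<in>UNIV. gen w ^ (if w = v then Poly_Mapping.lookup m w - 1 else Poly_Mapping.lookup m w)) * dgen v)"

lemma pder_alt: "pder p = (\<Sum>m\<in>Poly_Mapping.keys p. cL (Poly_Mapping.lookup p m) * dmon m)"
  unfolding pder_def coeffm_def expo_def dmon_def ..

lemma pder_add: "pder (p+q) = pder p + pder q"
  unfolding pder_alt
  by (rule setsum_keys_plus_distrib) (simp_all add: cL_add distrib_right)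

lemma pder_single: "pder (Poly_Mapping.single m c) = cL c * dmon m"
  by (simp add: pder_alt)

lemma pder_0[simp]: "pder 0 = 0" by (simp add: pder_alt)

lemma key_pow: "of_nat (a+b) * (g::'a::comm_semiring_1)^(a+b-1) = of_nat a * g^(a-1) * g^b + of_nat b * g^a * g^(b-1)"
proof (cases "a = 0 \<or> b = 0")
  case True then show ?thesis by auto
next
  case False
  then have "g^(a+b-1) = g^(a-1)*g^b" "g^(a+b-1) = g^a*g^(b-1)"
    by (simp_all add: power_add[symmetric])
  then show ?thesis by (simp add: algebra_simps)
qed

lemma prod_if_split: "(\<Prod>w\<in>(UNIV::var set). (g w :: L) ^ (if w = v then k w else e w)) = g v ^ k v * (\<Prod>w\<in>UNIV-{v}. g w ^ e w)"
proof -
  have "(\<Prod>w\<in>(UNIV::var set). g w ^ (if w = v then k w else e w)) = g v ^ k v * (\<Prod>w\<in>UNIV-{v}. g w ^ (if w = v then k w else e w))"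
    by (subst prod.remove[of _ v]) auto
  also have "(\<Prod>w\<in>UNIV-{v}. g w ^ (if w = v then k w else e w)) = (\<Prod>w\<in>UNIV-{v}. g w ^ e w)"
    by (rule prod.cong) auto
  finally show ?thesis .
qed

lemma ev_split: "ev g m = g v ^ Poly_Mapping.lookup m v * (\<Prod>w\<in>UNIV-{v}. g w ^ Poly_Mapping.lookup m w)"
  unfolding ev_def by (rule prod.remove) auto

lemma dmon_add: "dmon (m1 + m2) = dmon m1 * ev gen m2 + ev gen m1 * dmon m2"
proof -
  have "of_nat (Poly_Mapping.lookup (m1+m2) v) *
          (\<Prod>w\<in>UNIV. gen w ^ (if w = v then Poly_Mapping.lookup (m1+m2) w - 1 else Poly_Mapping.lookup (m1+m2) w)) * dgen v
      = of_nat (Poly_Mapping.lookup m1 v) *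
          (\<Prod>w\<in>UNIV. gen w ^ (if w = v then Poly_Mapping.lookup m1 w - 1 else Poly_Mapping.lookup m1 w)) * dgen v * ev gen m2
      + ev gen m1 * (of_nat (Poly_Mapping.lookup m2 v) *
          (\<Prod>w\<in>UNIV. gen w ^ (if w = v then Poly_Mapping.lookup m2 w - 1 else Poly_Mapping.lookup m2 w)) * dgen v)" for v
  proof -
    let ?a = "Poly_Mapping.lookup m1 v" and ?b = "Poly_Mapping.lookup m2 v"
    let ?P1 = "\<Prod>w\<in>UNIV-{v}. gen w ^ Poly_Mapping.lookup m1 w"
    let ?P2 = "\<Prod>w\<in>UNIV-{v}. gen w ^ Poly_Mapping.lookup m2 w"
    have P12: "(\<Prod>w\<in>UNIV-{v}. gen w ^ Poly_Mapping.lookup (m1+m2) w) = ?P1 * ?P2"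
      by (simp add: lookup_add power_add prod.distrib)
    show ?thesis
      unfolding prod_if_split ev_split[of gen m1 v] ev_split[of gen m2 v] P12[unfolded lookup_add] lookup_add
      by (cases ?a; cases ?b) (simp_all add: algebra_simps power_add)
  qed
  then show ?thesis
    unfolding dmon_def by (simp add: sum_distrib_left sum_distrib_right sum.distrib)
qed

lemma pder_mult: "pder (p*q) = pder p * toL q + toL p * pder q"
proof (induct p rule: mpoly_induct)
  case zero then show ?case by (simp add: toL_0)
next
  case (single m c)
  show ?case
  proof (induct q rule: mpoly_induct)
    case zero then show ?case by (simp add: toL_0)
  next
    case (single m' c') then show ?case
      by (simp add: mult_single pder_single dmon_add cL_mult toL_single algebra_simps)
  next
    case (add p q) then show ?case by (simp add: distrib_left distrib_right pder_add toL_add)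
  qed
next
  case (add p q) then show ?case by (simp add: distrib_right distrib_left pder_add toL_add)
qed

lemma pder_minus: "pder (-p) = - pder p"
  using pder_add[of "-p" p] by (simp add: eq_neg_iff_add_eq_0)

lemma D_frac: assumes b: "b \<noteq> 0"
  shows "D (toL a / toL b) = (pder a * toL b - toL a * pder b) / (toL b)^2"
proof -
  obtain a' b' where r: "rep (toL a / toL b) = (a', b')" by (cases "rep (toL a / toL b)")
  have ex: "\<exists>x. case x of (a'', b'') \<Rightarrow> b'' \<noteq> 0 \<and> toL a / toL b = Fract a'' b''"
    using b by (intro exI[of _ "(a,b)"]) (simp add: Fract_toL)
  have "case rep (toL a / toL b) of (a'', b'') \<Rightarrow> b'' \<noteq> 0 \<and> toL a / toL b = Fract a'' b''"
    unfolding rep_def by (rule someI_ex[OF ex])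
  then have b': "b' \<noteq> 0" and e: "toL a / toL b = toL a' / toL b'" using r by (auto simp: Fract_toL)
  have Bn: "toL b \<noteq> 0" "toL b' \<noteq> 0" using b b' by (simp_all add: toL_eq0)
  have e2: "toL a' * toL b = toL a * toL b'" using e Bn by (simp add: field_simps)
  then have "a' * b = a * b'" by (metis toL_mult toL_diff toL_eq0 eq_iff_diff_eq_0)
  then have e3: "pder a' * toL b + toL a' * pder b = pder a * toL b' + toL a * pder b'"
    using pder_mult[of a' b] pder_mult[of a b'] by simp
  have "(pder a' * toL b' - toL a' * pder b') * (toL b)^2 = (pder a * toL b - toL a * pder b) * (toL b')^2"
    using e2 e3 by algebra
  then show ?thesis using r Bn by (simp add: D_def field_simps)
qed

lemma D_toL: "D (toL p) = pder p"
  using D_frac[of 1 p] by (simp add: toL_1 pder_single[of 0 1, simplified] dmon_def)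

lemma D_add: "D (f + g) = D f + D g"
proof -
  obtain a b where ab: "b \<noteq> 0" "f = toL a / toL b" by (rule L_cases)
  obtain c d where cd: "d \<noteq> 0" "g = toL c / toL d" by (rule L_cases)
  have bd: "toL b \<noteq> 0" "toL d \<noteq> 0" using ab cd by (simp_all add: toL_eq0)
  have fg: "f + g = toL (a*d + c*b) / toL (b*d)" using ab cd bd by (simp add: toL_add toL_mult field_simps)
  have e1: "D (f+g) = (pder (a*d + c*b) * toL (b*d) - toL (a*d + c*b) * pder (b*d)) / (toL (b*d))^2"
    unfolding fg by (rule D_frac) (simp add: ab cd)
  have e2: "D f = (pder a * toL b - toL a * pder b)/(toL b)^2" using ab by (simp add: D_frac)
  have e3: "D g = (pder c * toL d - toL c * pder d)/(toL d)^2" using cd by (simp add: D_frac)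
  show ?thesis unfolding e1 e2 e3 using ab cd bd
    by (simp add: pder_add pder_mult toL_add toL_mult field_simps) (simp add: algebra_simps power2_eq_square)
qed

lemma D_mult: "D (f * g) = D f * g + f * D g"
proof -
  obtain a b where ab: "b \<noteq> 0" "f = toL a / toL b" by (rule L_cases)
  obtain c d where cd: "d \<noteq> 0" "g = toL c / toL d" by (rule L_cases)
  have bd: "toL b \<noteq> 0" "toL d \<noteq> 0" using ab cd by (simp_all add: toL_eq0)
  have fg: "f * g = toL (a*c) / toL (b*d)" using ab cd bd by (simp add: toL_mult)
  have e1: "D (f*g) = (pder (a*c) * toL (b*d) - toL (a*c) * pder (b*d)) / (toL (b*d))^2"
    unfolding fg by (rule D_frac) (simp add: ab cd)
  have e2: "D f = (pder a * toL b - toL a * pder b)/(toL b)^2" using ab by (simp add: D_frac)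
  have e3: "D g = (pder c * toL d - toL c * pder d)/(toL d)^2" using cd by (simp add: D_frac)
  show ?thesis unfolding e1 e2 e3 using bd
    by (simp add: ab(2) cd(2) pder_mult toL_mult field_simps) (simp add: algebra_simps eval_nat_numeral)
qed

lemma D_0[simp]: "D 0 = 0" using D_toL[of 0] by (simp add: toL_0)
lemma D_cL[simp]: "D (cL c) = 0"
  by (simp add: cL_def D_toL pder_single dmon_def)
lemma D_1[simp]: "D 1 = 0" using D_cL[of 1] by simp
lemma D_numeral[simp]: "D (numeral k) = 0" using D_cL[of "numeral k"] by (simp add: cL_numeral)
lemma D_of_int[simp]: "D (of_int k) = 0" using D_cL[of "of_int k"] by (simp add: cL_of_int)
lemma D_minus: "D (- f) = - D f"
  using D_add[of "-f" f] by (simp add: eq_neg_iff_add_eq_0)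
lemma D_diff: "D (f - g) = D f - D g"
  using D_add[of f "-g"] D_minus[of g] by simp
lemma D_div: "D (f / g) = (D f * g - f * D g) / g^2"
proof (cases "g = 0")
  case True then show ?thesis by simp
next
  case False
  have "D f = D ((f/g) * g)" using False by simp
  also have "\<dots> = D (f/g) * g + (f/g) * D g" by (rule D_mult)
  finally show ?thesis using False by (simp add: field_simps power2_eq_square)
qed
lemma D_power: "D (f ^ Suc n) = of_nat (Suc n) * f ^ n * D f"
  by (induct n) (simp_all add: D_mult algebra_simps)

lemma dmon_single: "dmon (Poly_Mapping.single v 1) = dgen v"
proof -
  have "dmon (Poly_Mapping.single v 1) = (\<Sum>u\<in>UNIV. if u = v then dgen v else 0)"
    unfolding dmon_def
    by (rule sum.cong) (auto simp: lookup_single when_def intro!: prod.neutral)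
  then show ?thesis by simp
qed

lemma D_gen: "D (gen v) = dgen v"
  unfolding gen_def D_toL pder_single dmon_single by simp


declare One_nat_def[simp del]

lemma tau_cong: "i mod 3 = j mod 3 \<Longrightarrow> tau i = tau j" by (simp add: tau_def)
lemma taup_cong: "i mod 3 = j mod 3 \<Longrightarrow> taup i = taup j" by (simp add: taup_def)
lemma alpha_cong: "i mod 3 = j mod 3 \<Longrightarrow> alpha i = alpha j" by (simp add: alpha_def)
lemma Fp_cong: "i mod 3 = j mod 3 \<Longrightarrow> Fp i = Fp j" by (simp add: Fp_def tau_def taup_def)
lemma Fpp_cong: assumes "i mod 3 = j mod 3" shows "Fpp i = Fpp j"
proof -
  have "(i+1) mod 3 = (j+1) mod 3" "(i+2) mod 3 = (j+2) mod 3"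
    using assms by (metis mod_add_left_eq)+
  then show ?thesis unfolding Fpp_def using assms by (metis Fp_cong alpha_cong)
qed
lemma phi_cong: assumes "i mod 3 = j mod 3" shows "phi i = phi j"
proof -
  have "(i+1) mod 3 = (j+1) mod 3" "(i+2) mod 3 = (j+2) mod 3"
    using assms by (metis mod_add_left_eq)+
  then show ?thesis unfolding phi_def by (metis tau_cong taup_cong)
qed

lemma per3:
  "tau 3 = tau 0" "tau 4 = tau 1" "tau 5 = tau 2" "tau 6 = tau 0"
  "taup 3 = taup 0" "taup 4 = taup 1" "taup 5 = taup 2" "taup 6 = taup 0"
  "alpha 3 = alpha 0" "alpha 4 = alpha 1" "alpha 5 = alpha 2" "alpha 6 = alpha 0"
  "Fp 3 = Fp 0" "Fp 4 = Fp 1" "Fp 5 = Fp 2" "Fp 6 = Fp 0"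
  "Fpp 3 = Fpp 0" "Fpp 4 = Fpp 1" "Fpp 5 = Fpp 2"
  "phi 3 = phi 0" "phi 4 = phi 1" "phi 5 = phi 2"
  by (simp_all add: tau_def taup_def alpha_def Fp_def) (rule Fpp_cong phi_cong; simp)+

lemma m3: "Suc (Suc (Suc i)) mod 3 = i mod 3" "(i+3) mod 3 = i mod 3" by presburger+

lemma norm3[simp]:
  "tau (Suc (Suc (Suc i))) = tau i" "taup (Suc (Suc (Suc i))) = taup i" "alpha (Suc (Suc (Suc i))) = alpha i"
  "Fp (Suc (Suc (Suc i))) = Fp i" "Fpp (Suc (Suc (Suc i))) = Fpp i" "phi (Suc (Suc (Suc i))) = phi i"
  "tau (i+3) = tau i" "taup (i+3) = taup i" "alpha (i+3) = alpha i"
  "Fp (i+3) = Fp i" "Fpp (i+3) = Fpp i" "phi (i+3) = phi i"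
  by (rule tau_cong taup_cong alpha_cong Fp_cong Fpp_cong phi_cong; simp only: m3)+

lemma norm12[simp]:
  "tau (Suc 0) = tau 1" "taup (Suc 0) = taup 1" "alpha (Suc 0) = alpha 1"
  "Fp (Suc 0) = Fp 1" "Fpp (Suc 0) = Fpp 1" "phi (Suc 0) = phi 1"
  "tau (Suc (Suc 0)) = tau 2" "taup (Suc (Suc 0)) = taup 2" "alpha (Suc (Suc 0)) = alpha 2"
  "Fp (Suc (Suc 0)) = Fp 2" "Fpp (Suc (Suc 0)) = Fpp 2" "phi (Suc (Suc 0)) = phi 2"
  by (simp_all add: numeral_2_eq_2 One_nat_def)

lemma toL_numeral: "toL (numeral k) = numeral k"
  using cL_toL[of "numeral k"] cL_numeral[of k] by simp

lemma mod3_cases: obtains "(i::nat) mod 3 = 0" | "i mod 3 = 1" | "i mod 3 = 2"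
proof -
  have "i mod 3 < 3" by simp
  then show ?thesis using that by linarith
qed

lemma tau_nz: "tau j \<noteq> 0" by (simp add: tau_def gen_nz)

lemma alpha0: "alpha 0 = gen Al0" and alpha1: "alpha 1 = gen Al1" and alpha2: "alpha 2 = 3 - gen Al0 - gen Al1"
  by (simp_all add: alpha_def)

lemma alpha_sum: "alpha 0 + alpha 1 + alpha 2 = 3" by (simp add: alpha_def)

lemma alpha2_nz: "alpha 2 \<noteq> 0"
proof
  let ?p = "3 - X Al0 - X Al1 :: mpoly"
  assume "alpha 2 = 0"
  then have "toL ?p = 0"
    by (simp add: alpha2 toL_diff gen_X[symmetric] toL_numeral)
  then have "?p = 0" by (simp add: toL_eq0)
  then have "Poly_Mapping.lookup ?p 0 = 0" by simp
  moreover have "Poly_Mapping.single Al0 (1::nat) \<noteq> 0" "Poly_Mapping.single Al1 (1::nat) \<noteq> 0"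
    by (metis lookup_single_eq lookup_zero one_neq_zero)+
  ultimately show False by (simp add: X_def lookup_minus lookup_single lookup_numeral)
qed

lemma alpha_nz: "alpha j \<noteq> 0"
proof (cases j rule: mod3_cases)
  case 3 then show ?thesis using alpha_cong[of j 2] alpha2_nz by simp
qed (simp_all add: alpha_def gen_nz)

lemma D_tau: "D (tau j) = taup j"
  by (cases j rule: mod3_cases) (simp_all add: tau_def taup_def D_gen)

lemma D_taup_012: "D (taup 0) = tau 0 * (Fpp 0 + (Fp 0)^2)" "D (taup 1) = tau 1 * (Fpp 1 + (Fp 1)^2)"
  "D (taup 2) = tau 2 * (Fpp 2 + (Fp 2)^2)"
proof -
  have "taup 0 = gen U0" "taup 1 = gen U1" "taup 2 = gen U2" by (simp_all add: taup_def)
  then show "D (taup 0) = tau 0 * (Fpp 0 + (Fp 0)^2)" "D (taup 1) = tau 1 * (Fpp 1 + (Fp 1)^2)"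
    "D (taup 2) = tau 2 * (Fpp 2 + (Fp 2)^2)" by (simp_all only: D_gen dgen.simps)
qed

lemma D_taup: "D (taup j) = tau j * (Fpp j + (Fp j)^2)"
proof -
  have e: "tau j = tau (j mod 3)" "Fp j = Fp (j mod 3)" "Fpp j = Fpp (j mod 3)" "taup j = taup (j mod 3)"
    by (rule tau_cong Fp_cong Fpp_cong taup_cong; simp)+
  show ?thesis unfolding e by (cases j rule: mod3_cases) (simp_all only: D_taup_012)
qed

lemma D_x[simp]: "D xL = 1" by (simp add: xL_def D_gen)
lemma D_alpha[simp]: "D (alpha j) = 0"
  by (simp add: alpha_def D_gen D_diff)

lemma D_Fp: "D (Fp j) = Fpp j"
  using tau_nz[of j] by (simp add: Fp_def D_div D_tau D_taup field_simps power2_eq_square)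

lemma phi_Fp: "phi i = Fp (i+1) - Fp (i+2) + xL" by (simp add: phi_def Fp_def)

lemma Fpp_expl:
  "Fpp 0 = - xL * (Fp 1 - Fp 2) - (Fp 0 - Fp 1) * (Fp 0 - Fp 2) - (alpha 1 - alpha 2) / 3"
  "Fpp 1 = - xL * (Fp 2 - Fp 0) - (Fp 1 - Fp 2) * (Fp 1 - Fp 0) - (alpha 2 - alpha 0) / 3"
  "Fpp 2 = - xL * (Fp 0 - Fp 1) - (Fp 2 - Fp 0) * (Fp 2 - Fp 1) - (alpha 0 - alpha 1) / 3"
  by (simp_all add: Fpp_def per3)

lemma phi_expl: "phi 0 = Fp 1 - Fp 2 + xL" "phi 1 = Fp 2 - Fp 0 + xL" "phi 2 = Fp 0 - Fp 1 + xL"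
  by (simp_all add: phi_Fp per3)

lemma D_phi_012:
  "D (phi 0) = phi 0 * (phi 2 - phi 1) + alpha 0"
  "D (phi 1) = phi 1 * (phi 0 - phi 2) + alpha 1"
  "D (phi 2) = phi 2 * (phi 1 - phi 0) + alpha 2"
  by (simp_all add: phi_expl D_add D_diff D_Fp Fpp_expl alpha0 alpha1 alpha2 field_simps)


lemma D_phi: "D (phi i) = phi i * (phi (i+2) - phi (i+1)) + alpha i"
proof -
  have c: "phi i = phi (i mod 3)" "phi (i+1) = phi (i mod 3 + 1)" "phi (i+2) = phi (i mod 3+2)" "alpha i = alpha (i mod 3)"
    by (rule phi_cong alpha_cong; metis mod_add_left_eq mod_mod_trivial)+
  show ?thesis unfolding c by (cases i rule: mod3_cases) (simp_all add: D_phi_012 per3)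
qed

lemma phi_nz: "phi i \<noteq> 0"
proof
  assume "phi i = 0"
  have "alpha i = D (phi i) - phi i * (phi (i+2) - phi (i+1))" by (simp add: D_phi)
  then have "alpha i = 0" using \<open>phi i = 0\<close> by simp
  then show False using alpha_nz by simp
qed

definition Sg :: "nat \<Rightarrow> L" where
  "Sg i = (taup (i+1) * tau (i+2) - tau (i+1) * taup (i+2) + xL * tau (i+1) * tau (i+2)) / tau i"

lemma Sg_eq: "Sg i = tau (i+1) * tau (i+2) * phi i / tau i"
  using tau_nz[of i] tau_nz[of "i+1"] tau_nz[of "i+2"] by (simp add: Sg_def phi_def field_simps)

lemma Sg_nz: "Sg i \<noteq> 0" by (simp add: Sg_eq tau_nz phi_nz)

lemma p1: "phi (i+1) = Fp (i+2) - Fp i + xL"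
proof -
  have a: "Fp (i+1+1) = Fp (i+2)" and b: "Fp (i+1+2) = Fp i" by (rule Fp_cong; presburger)+
  show ?thesis using phi_Fp[of "i+1"] unfolding a b .
qed
lemma p2: "phi (i+2) = Fp i - Fp (i+1) + xL"
proof -
  have a: "Fp (i+2+1) = Fp i" and b: "Fp (i+2+2) = Fp (i+1)" by (rule Fp_cong; presburger)+
  show ?thesis using phi_Fp[of "i+2"] unfolding a b .
qed

lemma D_Sg: "D (Sg i) = Sg i * (Fp i + alpha i / phi i)"
proof -
  have n: "tau i \<noteq> 0" "tau (i+1) \<noteq> 0" "tau (i+2) \<noteq> 0" "phi i \<noteq> 0" by (simp_all add: tau_nz phi_nz)
  have e: "D (Sg i) = D (tau (i+1) * tau (i+2) * phi i / tau i)" by (simp add: Sg_eq)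
  have f: "D (tau (i+1) * tau (i+2) * phi i / tau i) = tau (i+1) * tau (i+2) * phi i / tau i * (Fp (i+1) + Fp (i+2) + D (phi i) / phi i - Fp i)"
    using n unfolding D_div D_mult D_tau Fp_def by (simp add: field_simps power2_eq_square)
  show ?thesis unfolding e f D_phi p1 p2 Sg_eq
    using n by (simp add: field_simps)
qed


definition Dom :: "(var \<Rightarrow> L) \<Rightarrow> L set" where
  "Dom \<rho> = {f. \<exists>a b. b \<noteq> 0 \<and> peval \<rho> b \<noteq> 0 \<and> f = toL a / toL b}"

definition ext :: "(var \<Rightarrow> L) \<Rightarrow> L \<Rightarrow> L" where
  "ext \<rho> f = (case (SOME (a, b). b \<noteq> 0 \<and> peval \<rho> b \<noteq> 0 \<and> f = toL a / toL b) of (a, b) \<Rightarrow> peval \<rho> a / peval \<rho> b)"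

lemma toL_nz: "b \<noteq> 0 \<Longrightarrow> toL b \<noteq> 0" by (simp add: toL_eq0)

lemma toL_inj: "toL a = toL b \<Longrightarrow> a = b"
  by (metis toL_diff toL_eq0 eq_iff_diff_eq_0)

lemma ext_frac: assumes "b \<noteq> 0" "peval \<rho> b \<noteq> 0"
  shows "ext \<rho> (toL a / toL b) = peval \<rho> a / peval \<rho> b"
proof -
  let ?P = "\<lambda>(a', b'). b' \<noteq> 0 \<and> peval \<rho> b' \<noteq> 0 \<and> toL a / toL b = toL a' / toL b'"
  obtain a' b' where r: "(SOME x. ?P x) = (a', b')" by (cases "SOME x. ?P x")
  have "?P (a, b)" using assms by simp
  then have "?P (SOME x. ?P x)" by (rule someI)
  then have b': "b' \<noteq> 0" "peval \<rho> b' \<noteq> 0" and e: "toL a / toL b = toL a' / toL b'" using r by auto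
  have "toL (a * b') = toL (a' * b)" using e toL_nz[OF b'(1)] toL_nz[OF assms(1)]
    by (simp add: toL_mult field_simps)
  then have "a * b' = a' * b" by (rule toL_inj)
  then have "peval \<rho> a * peval \<rho> b' = peval \<rho> a' * peval \<rho> b" by (metis peval_mult)
  then have "peval \<rho> a / peval \<rho> b = peval \<rho> a' / peval \<rho> b'" using assms b' by (simp add: field_simps)
  then show ?thesis unfolding ext_def using r by simp
qed

lemma Dom_frac: "b \<noteq> 0 \<Longrightarrow> peval \<rho> b \<noteq> 0 \<Longrightarrow> toL a / toL b \<in> Dom \<rho>"
  unfolding Dom_def by blast

lemma DomE: assumes "f \<in> Dom \<rho>" obtains a b where "b \<noteq> 0" "peval \<rho> b \<noteq> 0" "f = toL a / toL b"
  using assms unfolding Dom_def by blast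

lemma Dom_add: assumes "f \<in> Dom \<rho>" "g \<in> Dom \<rho>"
  shows "f + g \<in> Dom \<rho> \<and> ext \<rho> (f + g) = ext \<rho> f + ext \<rho> g"
proof -
  obtain a b where ab: "b \<noteq> 0" "peval \<rho> b \<noteq> 0" "f = toL a / toL b" using assms(1) by (rule DomE)
  obtain c d where cd: "d \<noteq> 0" "peval \<rho> d \<noteq> 0" "g = toL c / toL d" using assms(2) by (rule DomE)
  have e: "f + g = toL (a*d + c*b) / toL (b*d)"
    using ab cd toL_nz[of b] toL_nz[of d] by (simp add: toL_add toL_mult field_simps)
  have n: "b*d \<noteq> 0" "peval \<rho> (b*d) \<noteq> 0" using ab cd by (simp_all add: peval_mult)
  show ?thesis unfolding e using n ab cd
    by (simp add: Dom_frac ext_frac peval_add peval_mult field_simps)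
qed

lemma Dom_mult: assumes "f \<in> Dom \<rho>" "g \<in> Dom \<rho>"
  shows "f * g \<in> Dom \<rho> \<and> ext \<rho> (f * g) = ext \<rho> f * ext \<rho> g"
proof -
  obtain a b where ab: "b \<noteq> 0" "peval \<rho> b \<noteq> 0" "f = toL a / toL b" using assms(1) by (rule DomE)
  obtain c d where cd: "d \<noteq> 0" "peval \<rho> d \<noteq> 0" "g = toL c / toL d" using assms(2) by (rule DomE)
  have e: "f * g = toL (a*c) / toL (b*d)"
    using ab cd by (simp add: toL_mult)
  have n: "b*d \<noteq> 0" "peval \<rho> (b*d) \<noteq> 0" using ab cd by (simp_all add: peval_mult)
  show ?thesis unfolding e using n ab cd
    by (simp add: Dom_frac ext_frac peval_mult)
qed

lemma Dom_minus: assumes "f \<in> Dom \<rho>"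
  shows "- f \<in> Dom \<rho> \<and> ext \<rho> (- f) = - ext \<rho> f"
proof -
  obtain a b where ab: "b \<noteq> 0" "peval \<rho> b \<noteq> 0" "f = toL a / toL b" using assms(1) by (rule DomE)
  have e: "- f = toL (-a) / toL b" using ab by (simp add: toL_minus)
  show ?thesis unfolding e using ab by (simp add: Dom_frac ext_frac peval_minus)
qed

lemma Dom_div: assumes "f \<in> Dom \<rho>" "g \<in> Dom \<rho>" "ext \<rho> g \<noteq> 0"
  shows "f / g \<in> Dom \<rho> \<and> ext \<rho> (f / g) = ext \<rho> f / ext \<rho> g"
proof -
  obtain a b where ab: "b \<noteq> 0" "peval \<rho> b \<noteq> 0" "f = toL a / toL b" using assms(1) by (rule DomE)
  obtain c d where cd: "d \<noteq> 0" "peval \<rho> d \<noteq> 0" "g = toL c / toL d" using assms(2) by (rule DomE)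
  have pc: "peval \<rho> c \<noteq> 0" using assms(3) cd by (simp add: ext_frac)
  then have c: "c \<noteq> 0" by auto
  have e: "f / g = toL (a*d) / toL (b*c)"
    using c toL_nz[of b] toL_nz[of d] toL_nz[of c] ab(1) cd(1) by (simp add: ab(3) cd(3) toL_mult field_simps)
  have n: "b*c \<noteq> 0" "peval \<rho> (b*c) \<noteq> 0" using ab c pc by (simp_all add: peval_mult)
  show ?thesis unfolding e using n ab cd pc
    by (simp add: Dom_frac ext_frac peval_mult field_simps)
qed

lemma Dom_toL: "toL p \<in> Dom \<rho> \<and> ext \<rho> (toL p) = peval \<rho> p"
  using Dom_frac[of 1 \<rho> p] ext_frac[of 1 \<rho> p] by (simp add: toL_1)

lemma Dom_gen: "gen v \<in> Dom \<rho> \<and> ext \<rho> (gen v) = \<rho> v"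
  using Dom_toL[of "X v" \<rho>] by (simp add: gen_X peval_X)

lemma Dom_cL: "cL c \<in> Dom \<rho> \<and> ext \<rho> (cL c) = cL c"
  using Dom_toL[of "Poly_Mapping.single 0 c" \<rho>] by (simp add: cL_toL peval_const)

lemma Dom_numeral: "numeral k \<in> Dom \<rho> \<and> ext \<rho> (numeral k) = numeral k"
  using Dom_cL[of "numeral k" \<rho>] by (simp add: cL_numeral)

lemma Dom_0: "0 \<in> Dom \<rho> \<and> ext \<rho> 0 = 0" using Dom_cL[of 0 \<rho>] by simp
lemma Dom_1: "1 \<in> Dom \<rho> \<and> ext \<rho> 1 = 1" using Dom_cL[of 1 \<rho>] by simp

lemma Dom_diff: assumes "f \<in> Dom \<rho>" "g \<in> Dom \<rho>"
  shows "f - g \<in> Dom \<rho> \<and> ext \<rho> (f - g) = ext \<rho> f - ext \<rho> g"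
  using Dom_add[OF assms(1) conjunct1[OF Dom_minus[OF assms(2)]]] Dom_minus[OF assms(2)] by simp

lemma Dom_power: assumes "f \<in> Dom \<rho>"
  shows "f ^ n \<in> Dom \<rho> \<and> ext \<rho> (f ^ n) = ext \<rho> f ^ n"
  by (induct n) (simp_all add: Dom_1 Dom_mult assms)

lemma Dom_sum: "(\<And>x. x \<in> A \<Longrightarrow> g x \<in> Dom \<rho>) \<Longrightarrow> sum g A \<in> Dom \<rho> \<and> ext \<rho> (sum g A) = (\<Sum>x\<in>A. ext \<rho> (g x))"
  by (induct A rule: infinite_finite_induct) (simp_all add: Dom_0 Dom_add)

lemma Dom_prod: "(\<And>x. x \<in> A \<Longrightarrow> g x \<in> Dom \<rho>) \<Longrightarrow> prod g A \<in> Dom \<rho> \<and> ext \<rho> (prod g A) = (\<Prod>x\<in>A. ext \<rho> (g x))"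
  by (induct A rule: infinite_finite_induct) (simp_all add: Dom_1 Dom_mult)

lemma Dom_peval: assumes "\<And>v. \<sigma> v \<in> Dom \<rho>"
  shows "peval \<sigma> p \<in> Dom \<rho> \<and> ext \<rho> (peval \<sigma> p) = peval (\<lambda>v. ext \<rho> (\<sigma> v)) p"
proof -
  have ev: "ev \<sigma> m \<in> Dom \<rho> \<and> ext \<rho> (ev \<sigma> m) = ev (\<lambda>v. ext \<rho> (\<sigma> v)) m" for m
    unfolding ev_def using Dom_prod[of UNIV "\<lambda>v. \<sigma> v ^ Poly_Mapping.lookup m v" \<rho>] Dom_power[OF assms]
    by simp
  show ?thesis unfolding peval_alt
    using Dom_sum[of "Poly_Mapping.keys p" "\<lambda>m. cL (Poly_Mapping.lookup p m) * ev \<sigma> m" \<rho>]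
      Dom_mult[OF conjunct1[OF Dom_cL] conjunct1[OF ev]] Dom_cL ev by simp
qed

definition fh :: "(var \<Rightarrow> L) \<Rightarrow> bool" where
  "fh \<sigma> \<longleftrightarrow> (\<forall>b. b \<noteq> 0 \<longrightarrow> peval \<sigma> b \<noteq> 0)"

lemma fh_intro: assumes "\<And>v. \<sigma> v \<in> Dom \<rho>" "\<And>v. ext \<rho> (\<sigma> v) = gen v"
  shows "fh \<sigma>"
  unfolding fh_def
proof (intro allI impI)
  fix b :: mpoly assume b: "b \<noteq> 0"
  have "ext \<rho> (peval \<sigma> b) = peval gen b" using Dom_peval[of \<sigma> \<rho> b] assms by simp
  also have "\<dots> = toL b" by (simp add: toL_peval)
  finally have "ext \<rho> (peval \<sigma> b) \<noteq> 0" using b by (simp add: toL_eq0)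
  then show "peval \<sigma> b \<noteq> 0" using Dom_0[of \<rho>] by auto
qed

lemma rep_prop: "case rep f of (a, b) \<Rightarrow> b \<noteq> 0 \<and> f = Fract a b"
proof -
  obtain a b where "f = Fract a b" "b \<noteq> 0" by (cases f)
  then have ex: "\<exists>x. case x of (a, b) \<Rightarrow> b \<noteq> 0 \<and> f = Fract a b" by (intro exI[of _ "(a,b)"]) simp
  show ?thesis unfolding rep_def by (rule someI_ex[OF ex])
qed

lemma fsubst_ext: assumes "fh \<sigma>" shows "fsubst \<sigma> f = ext \<sigma> f" and "f \<in> Dom \<sigma>"
proof -
  obtain a b where r: "rep f = (a, b)" by (cases "rep f")
  then have b: "b \<noteq> 0" and f: "f = toL a / toL b" using rep_prop[of f] by (auto simp: Fract_toL)
  have pb: "peval \<sigma> b \<noteq> 0" using assms b unfolding fh_def by blast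
  show "fsubst \<sigma> f = ext \<sigma> f" unfolding fsubst_def r using b pb f by (simp add: ext_frac)
  show "f \<in> Dom \<sigma>" using b pb f by (simp add: Dom_frac)
qed

definition FH :: "(L \<Rightarrow> L) \<Rightarrow> bool" where
  "FH H \<longleftrightarrow> (\<forall>a b. H (a + b) = H a + H b) \<and> (\<forall>a b. H (a * b) = H a * H b) \<and> (\<forall>c. H (cL c) = cL c)"

lemma FH_fsubst: assumes "fh \<sigma>" shows "FH (fsubst \<sigma>)"
  unfolding FH_def fsubst_ext[OF assms]
  using Dom_add Dom_mult Dom_cL fsubst_ext(2)[OF assms] by blast

lemma fsubst_gen: "fh \<sigma> \<Longrightarrow> fsubst \<sigma> (gen v) = \<sigma> v"
  by (simp add: fsubst_ext Dom_gen)

lemma fsubst_toL: "fh \<sigma> \<Longrightarrow> fsubst \<sigma> (toL p) = peval \<sigma> p"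
  by (simp add: fsubst_ext Dom_toL)

context fixes H assumes FH: "FH H"
begin
lemma H_add: "H (a + b) = H a + H b" using FH unfolding FH_def by blast
lemma H_mult: "H (a * b) = H a * H b" using FH unfolding FH_def by blast
lemma H_cL: "H (cL c) = cL c" using FH unfolding FH_def by blast
lemma H_0: "H 0 = 0" using H_cL[of 0] by simp
lemma H_1: "H 1 = 1" using H_cL[of 1] by simp
lemma H_numeral: "H (numeral k) = numeral k" using H_cL[of "numeral k"] by (simp add: cL_numeral)
lemma H_of_int: "H (of_int k) = of_int k" using H_cL[of "of_int k"] by (simp add: cL_of_int)
lemma H_minus: "H (- a) = - H a" using H_add[of "-a" a] H_0 by (simp add: eq_neg_iff_add_eq_0)
lemma H_diff: "H (a - b) = H a - H b" using H_add[of a "-b"] H_minus[of b] by simp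
lemma H_nz: "a \<noteq> 0 \<Longrightarrow> H a \<noteq> 0"
  using H_mult[of a "inverse a"] H_1 by auto
lemma H_eq0: "H a = 0 \<longleftrightarrow> a = 0" using H_nz H_0 by auto
lemma H_inverse: "H (inverse a) = inverse (H a)"
proof (cases "a = 0")
  case True then show ?thesis by (simp add: H_0)
next
  case False
  have "H a * H (inverse a) = 1" using H_mult[of a "inverse a"] H_1 False by simp
  then show ?thesis using H_nz[OF False] by (simp add: field_simps inverse_eq_divide)
qed
lemma H_div: "H (a / b) = H a / H b"
  by (simp add: divide_inverse H_mult H_inverse)
lemma H_of_nat: "H (of_nat k) = of_nat k" using H_cL[of "of_nat k"] by (simp add: cL_of_nat)
lemma H_power: "H (a ^ n) = H a ^ n" by (induct n) (simp_all add: H_1 H_mult)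
lemma H_sum: "H (sum g A) = (\<Sum>x\<in>A. H (g x))"
  by (induct A rule: infinite_finite_induct) (simp_all add: H_0 H_add)
lemma H_prod: "H (prod g A) = (\<Prod>x\<in>A. H (g x))"
  by (induct A rule: infinite_finite_induct) (simp_all add: H_1 H_mult)
lemma H_peval: "H (peval \<sigma> p) = peval (\<lambda>v. H (\<sigma> v)) p"
  unfolding peval_alt ev_def by (simp add: H_sum H_mult H_cL H_prod H_power)
lemma H_toL: "H (toL p) = peval (\<lambda>v. H (gen v)) p"
  by (simp add: toL_peval H_peval)
end

lemmas H_simps = H_add H_mult H_cL H_0 H_1 H_numeral H_of_int H_minus H_diff H_div H_power H_inverse

lemma FH_id: "FH id" by (simp add: FH_def)
lemma FH_comp: assumes "FH F" "FH G" shows "FH (F \<circ> G)"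
  unfolding FH_def comp_def by (simp add: H_add[OF assms(1)] H_add[OF assms(2)] H_mult[OF assms(1)] H_mult[OF assms(2)]
     H_cL[OF assms(1)] H_cL[OF assms(2)])
lemma FH_funpow: assumes "FH F" shows "FH (F ^^ n)"
proof (induct n)
  case 0 then show ?case using FH_id by (simp add: id_def)
next
  case (Suc n) then show ?case using FH_comp[OF assms Suc] by (simp only: funpow.simps)
qed
lemma FH_inv: assumes "FH F" "bij F" shows "FH (inv F)"
proof -
  have fi: "F (inv F y) = y" for y using assms(2) by (simp add: bij_is_surj surj_f_inv_f)
  have ij: "F x = F y \<Longrightarrow> x = y" for x y using bij_is_inj[OF assms(2)] by (rule injD)
  have "inv F (a + b) = inv F a + inv F b" for a b
    by (rule ij) (simp only: H_add[OF assms(1)] fi)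
  moreover have "inv F (a * b) = inv F a * inv F b" for a b
    by (rule ij) (simp only: H_mult[OF assms(1)] fi)
  moreover have "inv F (cL c) = cL c" for c
    by (rule ij) (simp only: H_cL[OF assms(1)] fi)
  ultimately show ?thesis by (simp add: FH_def)
qed

lemma FH_unique: assumes "FH F" "FH G" "\<And>v. F (gen v) = G (gen v)" shows "F = G"
proof
  fix f
  obtain a b where ab: "b \<noteq> 0" "f = toL a / toL b" by (rule L_cases)
  show "F f = G f" unfolding ab(2) using assms by (simp add: H_div H_toL)
qed

definition DC :: "(L \<Rightarrow> L) \<Rightarrow> bool" where "DC H \<longleftrightarrow> (\<forall>f. H (D f) = D (H f))"

lemma DC_id: "DC id" by (simp add: DC_def)
lemma DC_comp: "DC F \<Longrightarrow> DC G \<Longrightarrow> DC (F \<circ> G)" by (simp add: DC_def)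
lemma DC_funpow: assumes "DC F" shows "DC (F ^^ n)"
proof (induct n)
  case 0 then show ?case using DC_id by (simp add: id_def)
next
  case (Suc n) then show ?case using DC_comp[OF assms Suc] by (simp only: funpow.simps)
qed
lemma DC_inv: assumes "DC F" "bij F" shows "DC (inv F)"
proof -
  have fi: "F (inv F y) = y" for y using assms(2) by (simp add: bij_is_surj surj_f_inv_f)
  have ij: "F x = F y \<Longrightarrow> x = y" for x y using bij_is_inj[OF assms(2)] by (rule injD)
  have "inv F (D f) = D (inv F f)" for f
  proof (rule ij)
    have "F (D (inv F f)) = D (F (inv F f))" using assms(1) unfolding DC_def by blast
    then show "F (inv F (D f)) = F (D (inv F f))" by (simp only: fi)
  qed
  then show ?thesis by (simp add: DC_def)
qed

lemma D_pow: "D (g ^ n) = of_nat n * g ^ (n - 1) * D g"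
proof (cases n)
  case 0 then show ?thesis by simp
next
  case (Suc k) then show ?thesis by (simp only: D_power diff_Suc_1)
qed

lemma D_prod_pow: "finite A \<Longrightarrow> D (\<Prod>w\<in>A. g w ^ e w) =
   (\<Sum>v\<in>A. of_nat (e v) * (\<Prod>w\<in>A. g w ^ (if w = v then e w - 1 else e w)) * D (g v))"
proof (induct A rule: finite_induct)
  case empty then show ?case by simp
next
  case (insert a A)
  have s1a: "(\<Prod>w\<in>A. g w ^ (if w = a then e w - 1 else e w)) = (\<Prod>w\<in>A. g w ^ e w)"
    using insert(2) by (intro prod.cong) auto
  have s1: "(\<Prod>w\<in>insert a A. g w ^ (if w = a then e w - 1 else e w)) = g a ^ (e a - 1) * (\<Prod>w\<in>A. g w ^ e w)"
    unfolding prod.insert[OF insert(1,2)] s1a by simp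
  have s2: "v \<in> A \<Longrightarrow> (\<Prod>w\<in>insert a A. g w ^ (if w = v then e w - 1 else e w)) = g a ^ e a * (\<Prod>w\<in>A. g w ^ (if w = v then e w - 1 else e w))" for v
    using insert by (auto simp: prod.insert)
  have "D (\<Prod>w\<in>insert a A. g w ^ e w) = D (g a ^ e a) * (\<Prod>w\<in>A. g w ^ e w) + g a ^ e a * D (\<Prod>w\<in>A. g w ^ e w)"
    using insert by (simp add: D_mult)
  also have "\<dots> = of_nat (e a) * (\<Prod>w\<in>insert a A. g w ^ (if w = a then e w - 1 else e w)) * D (g a)
     + (\<Sum>v\<in>A. of_nat (e v) * (\<Prod>w\<in>insert a A. g w ^ (if w = v then e w - 1 else e w)) * D (g v))"
    unfolding insert(3) D_pow s1 by (simp add: sum_distrib_left s2 algebra_simps cong: sum.cong)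
  also have "\<dots> = (\<Sum>v\<in>insert a A. of_nat (e v) * (\<Prod>w\<in>insert a A. g w ^ (if w = v then e w - 1 else e w)) * D (g v))"
    using insert by simp
  finally show ?case .
qed

lemma DC_intro: assumes FH: "FH H" and g: "\<And>v. H (dgen v) = D (H (gen v))" shows "DC H"
proof -
  have dmon: "H (dmon m) = D (ev (\<lambda>v. H (gen v)) m)" for m
    unfolding dmon_def ev_def D_prod_pow[OF finite_UNIV]
    by (simp add: H_sum[OF FH] H_mult[OF FH] H_prod[OF FH] H_power[OF FH] g H_of_nat[OF FH])
  have pd: "H (pder p) = D (H (toL p))" for p
  proof (induct p rule: mpoly_induct)
    case zero then show ?case by (simp add: toL_0 H_0[OF FH])
  next
    case (single m c) then show ?case
      by (simp add: pder_single toL_single H_mult[OF FH] H_cL[OF FH] dmon D_mult ev_def H_prod[OF FH] H_power[OF FH])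
  next
    case (add p q) then show ?case by (simp add: pder_add toL_add H_add[OF FH] D_add)
  qed
  show ?thesis unfolding DC_def
  proof
    fix f
    obtain a b where ab: "b \<noteq> 0" "f = toL a / toL b" by (rule L_cases)
    show "H (D f) = D (H f)" unfolding ab(2) D_frac[OF ab(1)]
      by (simp add: H_div[OF FH] H_diff[OF FH] H_mult[OF FH] H_power[OF FH] pd D_div)
  qed
qed

lemma gen_U: "gen U0 = D (tau 0)" "gen U1 = D (tau 1)" "gen U2 = D (tau 2)"
  by (simp_all add: D_tau taup_def)
lemma gen_T: "gen T0 = tau 0" "gen T1 = tau 1" "gen T2 = tau 2"
  by (simp_all add: tau_def)

lemma hom_ext: assumes "FH F" "FH G" "DC F" "DC G"
  "F (alpha 0) = G (alpha 0)" "F (alpha 1) = G (alpha 1)" "F xL = G xL"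
  "F (tau 0) = G (tau 0)" "F (tau 1) = G (tau 1)" "F (tau 2) = G (tau 2)"
  shows "F = G"
proof (rule FH_unique[OF assms(1,2)])
  fix v show "F (gen v) = G (gen v)"
    using assms(3-) unfolding DC_def
    by (cases v) (simp_all add: gen_U gen_T alpha0[symmetric] alpha1[symmetric] xL_def[symmetric])
qed


lemma ext_add: "f \<in> Dom \<rho> \<Longrightarrow> g \<in> Dom \<rho> \<Longrightarrow> ext \<rho> (f + g) = ext \<rho> f + ext \<rho> g" by (simp add: Dom_add)
lemma Dom_add': "f \<in> Dom \<rho> \<Longrightarrow> g \<in> Dom \<rho> \<Longrightarrow> f + g \<in> Dom \<rho>" by (simp add: Dom_add)
lemma ext_mult: "f \<in> Dom \<rho> \<Longrightarrow> g \<in> Dom \<rho> \<Longrightarrow> ext \<rho> (f * g) = ext \<rho> f * ext \<rho> g" by (simp add: Dom_mult)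
lemma Dom_mult': "f \<in> Dom \<rho> \<Longrightarrow> g \<in> Dom \<rho> \<Longrightarrow> f * g \<in> Dom \<rho>" by (simp add: Dom_mult)
lemma ext_diff: "f \<in> Dom \<rho> \<Longrightarrow> g \<in> Dom \<rho> \<Longrightarrow> ext \<rho> (f - g) = ext \<rho> f - ext \<rho> g" by (simp add: Dom_diff)
lemma Dom_diff': "f \<in> Dom \<rho> \<Longrightarrow> g \<in> Dom \<rho> \<Longrightarrow> f - g \<in> Dom \<rho>" by (simp add: Dom_diff)
lemma ext_minus: "f \<in> Dom \<rho> \<Longrightarrow> ext \<rho> (- f) = - ext \<rho> f" by (simp add: Dom_minus)
lemma Dom_minus': "f \<in> Dom \<rho> \<Longrightarrow> - f \<in> Dom \<rho>" by (simp add: Dom_minus)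
lemma ext_div: "f \<in> Dom \<rho> \<Longrightarrow> g \<in> Dom \<rho> \<Longrightarrow> ext \<rho> g \<noteq> 0 \<Longrightarrow> ext \<rho> (f / g) = ext \<rho> f / ext \<rho> g" by (simp add: Dom_div)
lemma Dom_div': "f \<in> Dom \<rho> \<Longrightarrow> g \<in> Dom \<rho> \<Longrightarrow> ext \<rho> g \<noteq> 0 \<Longrightarrow> f / g \<in> Dom \<rho>" by (simp add: Dom_div)
lemma ext_numeral: "ext \<rho> (numeral k) = numeral k" by (simp add: Dom_numeral)
lemma Dom_numeral': "numeral k \<in> Dom \<rho>" by (simp add: Dom_numeral)
lemma ext_power: "f \<in> Dom \<rho> \<Longrightarrow> ext \<rho> (f ^ n) = ext \<rho> f ^ n" by (simp add: Dom_power)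
lemma Dom_power': "f \<in> Dom \<rho> \<Longrightarrow> f ^ n \<in> Dom \<rho>" by (simp add: Dom_power)

lemmas ext_rules = ext_add Dom_add' ext_mult Dom_mult' ext_diff Dom_diff' ext_minus Dom_minus'
  ext_div Dom_div' ext_numeral Dom_numeral' ext_power Dom_power'

definition sig :: "(nat \<Rightarrow> L) \<Rightarrow> (nat \<Rightarrow> L) \<Rightarrow> var \<Rightarrow> L" where
  "sig a t = (\<lambda>v. case v of Al0 \<Rightarrow> a 0 | Al1 \<Rightarrow> a 1 | Xv \<Rightarrow> xL
      | T0 \<Rightarrow> t 0 | T1 \<Rightarrow> t 1 | T2 \<Rightarrow> t 2
      | U0 \<Rightarrow> D (t 0) | U1 \<Rightarrow> D (t 1) | U2 \<Rightarrow> D (t 2))"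

lemma mk_aut_sig: "mk_aut a t = fsubst (sig a t)"
  unfolding mk_aut_def sig_def ..

lemma tau_gen: "tau k = gen (if k mod 3 = 0 then T0 else if k mod 3 = 1 then T1 else T2)"
  by (simp add: tau_def)
lemma taup_gen: "taup k = gen (if k mod 3 = 0 then U0 else if k mod 3 = 1 then U1 else U2)"
  by (simp add: taup_def)

definition per :: "(nat \<Rightarrow> L) \<Rightarrow> bool" where "per t \<longleftrightarrow> (\<forall>k. t k = t (k mod 3))"

lemma sig_tau: assumes "per t" shows "sig a t (if k mod 3 = 0 then T0 else if k mod 3 = 1 then T1 else T2) = t k"
proof -
  have e: "t k = t (k mod 3)" using assms by (simp add: per_def)
  show ?thesis by (cases k rule: mod3_cases) (simp_all add: sig_def e)
qed
lemma sig_taup: assumes "per t" shows "sig a t (if k mod 3 = 0 then U0 else if k mod 3 = 1 then U1 else U2) = D (t k)"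
proof -
  have e: "t k = t (k mod 3)" using assms by (simp add: per_def)
  show ?thesis by (cases k rule: mod3_cases) (simp_all add: sig_def e)
qed

lemma Dom_tau: "tau k \<in> Dom \<rho>" unfolding tau_gen by (simp add: Dom_gen)
lemma Dom_taup: "taup k \<in> Dom \<rho>" unfolding taup_gen by (simp add: Dom_gen)
lemma Dom_xL: "xL \<in> Dom \<rho>" unfolding xL_def by (simp add: Dom_gen)
lemma Dom_alpha: "alpha k \<in> Dom \<rho>"
  unfolding alpha_def by (simp add: Dom_gen Dom_diff' Dom_numeral')

lemma ext_sig_tau: "per t \<Longrightarrow> ext (sig a t) (tau k) = t k"
  unfolding tau_gen by (simp only: Dom_gen sig_tau)
lemma ext_sig_taup: "per t \<Longrightarrow> ext (sig a t) (taup k) = D (t k)"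
  unfolding taup_gen by (simp only: Dom_gen sig_taup)
lemma ext_sig_xL: "ext (sig a t) xL = xL"
proof -
  have "ext (sig a t) (gen Xv) = xL" by (simp add: Dom_gen sig_def)
  then show ?thesis by (simp add: xL_def)
qed
lemma ext_sig_alpha: assumes "per a" "a 2 = 3 - a 0 - a 1" shows "ext (sig a t) (alpha k) = a k"
proof -
  have "a k = a (k mod 3)" using assms(1) by (simp add: per_def)
  then show ?thesis using assms(2)
    by (cases k rule: mod3_cases) (simp_all add: alpha_def Dom_gen sig_def ext_rules)
qed

lemma Dom_Fp_gen: "ext \<rho> (tau k) \<noteq> 0 \<Longrightarrow> Fp k \<in> Dom \<rho> \<and> ext \<rho> (Fp k) = ext \<rho> (taup k) / ext \<rho> (tau k)"
  unfolding Fp_def by (simp add: Dom_tau Dom_taup ext_rules)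


definition sa :: "nat \<Rightarrow> nat \<Rightarrow> L" where "sa i j = (if j mod 3 = i mod 3 then - alpha j else alpha j + alpha i)"
definition st :: "nat \<Rightarrow> nat \<Rightarrow> L" where "st i j = (if j mod 3 = i mod 3 then Sg i else tau j)"
definition ss :: "nat \<Rightarrow> var \<Rightarrow> L" where "ss i = sig (sa i) (st i)"

lemma s_fsubst: "s i = fsubst (ss i)"
  by (simp only: s_def mk_aut_sig ss_def) (simp only: sa_def[abs_def] st_def[abs_def] Sg_def)

lemma per_st: "per (st i)"
  unfolding per_def
proof
  fix k have "tau k = tau (k mod 3)" by (rule tau_cong) simp
  then show "st i k = st i (k mod 3)" by (simp add: st_def)
qed
lemma per_sa: "per (sa i)"
  unfolding per_def
proof
  fix k have "alpha k = alpha (k mod 3)" by (rule alpha_cong) simp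
  then show "sa i k = sa i (k mod 3)" by (simp add: sa_def)
qed

lemma i3: "(i::nat) < 3 \<Longrightarrow> i = 0 \<or> i = 1 \<or> i = 2" by auto

lemma sa2: "i < 3 \<Longrightarrow> sa i 2 = 3 - sa i 0 - sa i 1"
  using alpha_sum by (auto dest!: i3 simp: sa_def algebra_simps)

lemma st_nz: "st i k \<noteq> 0" by (simp add: st_def Sg_nz tau_nz)

lemma D_st: "D (st i k) = (if k mod 3 = i mod 3 then Sg i * (Fp i + alpha i / phi i) else taup k)"
  by (simp add: st_def D_Sg D_tau)

context fixes i :: nat assumes i: "i < 3"
begin

abbreviation "E \<equiv> ext (ss i)"

lemma E_tau: "E (tau k) = st i k" unfolding ss_def by (rule ext_sig_tau[OF per_st])
lemma E_taup: "E (taup k) = D (st i k)" unfolding ss_def by (rule ext_sig_taup[OF per_st])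
lemma E_alpha: "E (alpha k) = sa i k" unfolding ss_def by (rule ext_sig_alpha[OF per_sa sa2[OF i]])
lemma E_xL: "E xL = xL" unfolding ss_def by (rule ext_sig_xL)

lemma E_Fp: "Fp k \<in> Dom (ss i) \<and> E (Fp k) = (if k mod 3 = i mod 3 then Fp i + alpha i / phi i else Fp k)"
  using Dom_Fp_gen[of "ss i" k] st_nz[of i k] Sg_nz[of i]
  by (simp add: E_tau E_taup D_st) (simp add: st_def Fp_def D_tau)

lemma E_phi: "phi i \<in> Dom (ss i) \<and> E (phi i) = phi i"
proof -
  have "(i+1) mod 3 \<noteq> i mod 3" "(i+2) mod 3 \<noteq> i mod 3" by presburger+
  then show ?thesis unfolding phi_Fp using E_Fp[of "i+1"] E_Fp[of "i+2"]
    by (simp add: ext_rules Dom_xL E_xL)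
qed

lemma E_Sg: "Sg i \<in> Dom (ss i) \<and> E (Sg i) = tau i"
proof -
  have m: "(i+1) mod 3 \<noteq> i mod 3" "(i+2) mod 3 \<noteq> i mod 3" by presburger+
  have a: "E (tau (i+1)) = tau (i+1)" "E (tau (i+2)) = tau (i+2)" "E (tau i) = Sg i"
    using m by (simp_all only: E_tau st_def if_True if_False refl)
  have d: "tau (i+1) * tau (i+2) * phi i \<in> Dom (ss i)" by (intro Dom_mult' Dom_tau E_phi[THEN conjunct1])
  have n: "E (tau i) \<noteq> 0" unfolding a by (rule Sg_nz)
  have e1: "E (tau (i+1) * tau (i+2) * phi i / tau i) = E (tau (i+1) * tau (i+2) * phi i) / E (tau i)"
    by (rule ext_div[OF d Dom_tau n])
  have e2: "E (tau (i+1) * tau (i+2) * phi i) = tau (i+1) * tau (i+2) * phi i"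
    by (simp only: ext_mult Dom_mult' Dom_tau E_phi a)
  have "E (Sg i) = tau i"
    unfolding Sg_eq[of i] e1 e2 a using tau_nz[of i] tau_nz[of "i+1"] tau_nz[of "i+2"] phi_nz[of i]
    by (simp add: Sg_eq field_simps)
  moreover have "Sg i \<in> Dom (ss i)" unfolding Sg_eq[of i] by (rule Dom_div'[OF d Dom_tau n])
  ultimately show ?thesis by simp
qed

lemma E_DSg: "D (Sg i) \<in> Dom (ss i) \<and> E (D (Sg i)) = taup i"
  unfolding D_Sg using E_Sg E_phi E_Fp[of i] phi_nz[of i]
  by (simp add: ext_rules Dom_alpha E_alpha) (simp add: sa_def Fp_def tau_nz field_simps)

lemma ss_vals: "ss i Al0 = sa i 0" "ss i Al1 = sa i 1" "ss i Xv = xL"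
  "ss i T0 = st i 0" "ss i T1 = st i 1" "ss i T2 = st i 2"
  "ss i U0 = D (st i 0)" "ss i U1 = D (st i 1)" "ss i U2 = D (st i 2)"
  by (simp_all add: ss_def sig_def)

lemma ss_Dom: "ss i v \<in> Dom (ss i)"
  using E_Sg E_DSg
  by (cases v) (simp_all only: ss_vals, simp_all add: sa_def st_def D_tau Dom_alpha Dom_tau Dom_taup Dom_xL ext_rules)

lemma ss_E: "E (ss i v) = gen v"
proof (cases v)
  case Al0 then show ?thesis using i3[OF i]
    by (auto simp: ss_vals sa_def Dom_alpha ext_rules E_alpha alpha0[symmetric])
next
  case Al1 then show ?thesis using i3[OF i]
    by (auto simp: ss_vals sa_def Dom_alpha ext_rules E_alpha alpha1[symmetric])
next
  case Xv then show ?thesis by (simp add: ss_vals E_xL, simp add: xL_def)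
next
  case T0 then show ?thesis using i3[OF i] E_Sg
    by (auto simp: ss_vals st_def E_tau gen_T)
next
  case T1 then show ?thesis using i3[OF i] E_Sg
    by (auto simp: ss_vals st_def E_tau gen_T)
next
  case T2 then show ?thesis using i3[OF i] E_Sg
    by (auto simp: ss_vals st_def E_tau gen_T)
next
  case U0 then show ?thesis using i3[OF i] E_DSg
    by (auto simp: ss_vals st_def E_taup D_tau gen_U)
next
  case U1 then show ?thesis using i3[OF i] E_DSg
    by (auto simp: ss_vals st_def E_taup D_tau gen_U)
next
  case U2 then show ?thesis using i3[OF i] E_DSg
    by (auto simp: ss_vals st_def E_taup D_tau gen_U)
qed

lemma fh_ss: "fh (ss i)"
  by (rule fh_intro[of _ "ss i"]) (simp_all add: ss_Dom ss_E)

lemma FH_s: "FH (s i)" unfolding s_fsubst by (rule FH_fsubst[OF fh_ss])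

lemma s_ext: "s i f = E f" unfolding s_fsubst by (rule fsubst_ext(1)[OF fh_ss])
lemma s_Dom: "f \<in> Dom (ss i)" by (rule fsubst_ext(2)[OF fh_ss])

lemma s_tau: "s i (tau k) = st i k" by (simp add: s_ext E_tau)
lemma s_taup: "s i (taup k) = D (st i k)" by (simp add: s_ext E_taup)
lemma s_alpha: "s i (alpha k) = sa i k" by (simp add: s_ext E_alpha)
lemma s_xL: "s i xL = xL" by (simp add: s_ext E_xL)
lemma s_Fp: "s i (Fp k) = (if k mod 3 = i mod 3 then Fp i + alpha i / phi i else Fp k)"
  by (simp add: s_ext E_Fp)

end


lemma gen_U': "gen U0 = taup 0" "gen U1 = taup 1" "gen U2 = taup 2" by (simp_all add: taup_def)
lemma gen_A: "gen Al0 = alpha 0" "gen Al1 = alpha 1" by (simp_all add: alpha_def)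
lemma gen_X': "gen Xv = xL" by (simp add: xL_def)

lemma DC_intro': assumes "FH H"
  "H 0 = D (H (alpha 0))" "H 0 = D (H (alpha 1))" "H 1 = D (H xL)"
  "\<And>k. k < 3 \<Longrightarrow> H (taup k) = D (H (tau k))"
  "\<And>k. k < 3 \<Longrightarrow> H (tau k * (Fpp k + (Fp k)^2)) = D (H (taup k))"
  shows "DC H"
proof (rule DC_intro[OF assms(1)])
  fix v show "H (dgen v) = D (H (gen v))"
    using assms(2-4) assms(5)[of 0] assms(5)[of 1] assms(5)[of 2] assms(6)[of 0] assms(6)[of 1] assms(6)[of 2]
    by (cases v) (simp_all add: gen_U' gen_A gen_X' gen_T)
qed

definition pa :: "nat \<Rightarrow> L" where "pa j = alpha (j+1)"
definition pt :: "nat \<Rightarrow> L" where "pt j = tau (j+1)"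
definition qa :: "nat \<Rightarrow> L" where "qa j = alpha (j+2)"
definition qt :: "nat \<Rightarrow> L" where "qt j = tau (j+2)"

lemma pi_fsubst: "pi = fsubst (sig pa pt)"
  by (simp only: pi_def mk_aut_sig) (simp only: pa_def[abs_def] pt_def[abs_def])

lemma per_shift_tau: "per (\<lambda>j. tau (j + c))"
  unfolding per_def by (auto intro: tau_cong simp: mod_add_left_eq)
lemma per_shift_alpha: "per (\<lambda>j. alpha (j + c))"
  unfolding per_def by (auto intro: alpha_cong simp: mod_add_left_eq)

lemma per_pt: "per pt" using per_shift_tau[of 1] unfolding pt_def[abs_def] .
lemma per_qt: "per qt" using per_shift_tau[of 2] unfolding qt_def[abs_def] .
lemma per_pa: "per pa" using per_shift_alpha[of 1] unfolding pa_def[abs_def] .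
lemma per_qa: "per qa" using per_shift_alpha[of 2] unfolding qa_def[abs_def] .

lemma pa2: "pa 2 = 3 - pa 0 - pa 1" using alpha_sum by (simp add: pa_def per3 algebra_simps)
lemma qa2: "qa 2 = 3 - qa 0 - qa 1" using alpha_sum by (simp add: qa_def per3 algebra_simps)

lemma pvals: "sig pa pt Al0 = alpha 1" "sig pa pt Al1 = alpha 2" "sig pa pt Xv = xL"
  "sig pa pt T0 = tau 1" "sig pa pt T1 = tau 2" "sig pa pt T2 = tau 0"
  "sig pa pt U0 = taup 1" "sig pa pt U1 = taup 2" "sig pa pt U2 = taup 0"
  by (simp_all add: sig_def pa_def pt_def D_tau per3)

lemma fh_p: "fh (sig pa pt)"
proof (rule fh_intro[of _ "sig qa qt"])
  fix v
  show "sig pa pt v \<in> Dom (sig qa qt)"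
    by (cases v) (simp_all add: pvals Dom_alpha Dom_tau Dom_taup Dom_xL)
  show "ext (sig qa qt) (sig pa pt v) = gen v"
    by (cases v) (simp_all add: pvals ext_sig_alpha[OF per_qa qa2] ext_sig_tau[OF per_qt] ext_sig_taup[OF per_qt]
      ext_sig_xL qa_def qt_def per3 D_tau gen_U' gen_A gen_X' gen_T)
qed

lemma FH_pi: "FH pi" unfolding pi_fsubst by (rule FH_fsubst[OF fh_p])

lemma pi_tau: "pi (tau k) = tau (k+1)"
  unfolding pi_fsubst fsubst_ext(1)[OF fh_p] by (simp add: ext_sig_tau[OF per_pt] pt_def)
lemma pi_taup: "pi (taup k) = taup (k+1)"
  unfolding pi_fsubst fsubst_ext(1)[OF fh_p] by (simp add: ext_sig_taup[OF per_pt] pt_def D_tau)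
lemma pi_alpha: "pi (alpha k) = alpha (k+1)"
  unfolding pi_fsubst fsubst_ext(1)[OF fh_p] by (simp add: ext_sig_alpha[OF per_pa pa2] pa_def)
lemma pi_xL: "pi xL = xL"
  unfolding pi_fsubst fsubst_ext(1)[OF fh_p] by (rule ext_sig_xL)
lemma pi_Fp: "pi (Fp k) = Fp (k+1)"
  by (simp add: Fp_def H_div[OF FH_pi] pi_tau pi_taup)
lemma pi_Fpp: "pi (Fpp k) = Fpp (k+1)"
  unfolding Fpp_def by (simp add: H_simps[OF FH_pi] pi_Fp pi_alpha pi_xL)
lemma pi_phi: "pi (phi k) = phi (k+1)"
  unfolding phi_def by (simp add: H_simps[OF FH_pi] pi_tau pi_taup pi_xL)

lemma DC_pi: "DC pi"
proof (rule DC_intro'[OF FH_pi])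
  show "pi 0 = D (pi (alpha 0))" "pi 0 = D (pi (alpha 1))" "pi 1 = D (pi xL)"
    by (simp_all add: H_simps[OF FH_pi] pi_alpha pi_xL)
  fix k
  show "pi (taup k) = D (pi (tau k))" by (simp add: pi_tau pi_taup D_tau)
  show "pi (tau k * (Fpp k + (Fp k)^2)) = D (pi (taup k))"
    by (simp add: H_simps[OF FH_pi] pi_tau pi_taup pi_Fp pi_Fpp D_taup)
qed


lemma alpha2': "alpha 2 = 3 - alpha 0 - alpha 1" using alpha_sum by (simp add: algebra_simps)

lemma phinz_expl: "Fp 1 - Fp 2 + xL \<noteq> 0" "Fp 2 - Fp 0 + xL \<noteq> 0" "Fp 0 - Fp 1 + xL \<noteq> 0"
  using phi_nz[of 0] phi_nz[of 1] phi_nz[of 2] by (simp_all add: phi_expl)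

lemma s_Fpp: assumes "i < 3" "k < 3"
  shows "s i (Fpp k) = Fpp k - (if k = i then alpha i * (phi (i+2) - phi (i+1)) / phi i + (alpha i / phi i)^2 else 0)"
proof -
  note H = H_simps[OF FH_s[OF assms(1)]]
  have h1: "s i (Fpp k) = - s i xL * (s i (Fp (k+1)) - s i (Fp (k+2))) - (s i (Fp k) - s i (Fp (k+1))) * (s i (Fp k) - s i (Fp (k+2))) - (s i (alpha (k+1)) - s i (alpha (k+2))) / 3"
    unfolding Fpp_def by (simp only: H)
  note h2 = h1[unfolded s_Fp[OF assms(1)] s_alpha[OF assms(1)] s_xL[OF assms(1)]]
  have n: "phi 0 \<noteq> 0" "phi 1 \<noteq> 0" "phi 2 \<noteq> 0" by (simp_all add: phi_nz)
  consider "i = 0" "k = 0" | "i = 0" "k = 1" | "i = 0" "k = 2" | "i = 1" "k = 0" | "i = 1" "k = 1" | "i = 1" "k = 2"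
    | "i = 2" "k = 0" | "i = 2" "k = 1" | "i = 2" "k = 2" using i3[OF assms(1)] i3[OF assms(2)] by blast
  then show ?thesis
  proof cases
    case 1 then show ?thesis using n(1) unfolding h2 by (simp add: Fpp_expl sa_def per3 alpha2' field_simps) (simp add: phi_expl algebra_simps power2_eq_square)
  next
    case 2 then show ?thesis using n(1) unfolding h2 by (simp add: Fpp_expl sa_def per3 alpha2' field_simps) (simp add: phi_expl algebra_simps power2_eq_square)
  next
    case 3 then show ?thesis using n(1) unfolding h2 by (simp add: Fpp_expl sa_def per3 alpha2' field_simps) (simp add: phi_expl algebra_simps power2_eq_square)
  next
    case 4 then show ?thesis using n(2) unfolding h2 by (simp add: Fpp_expl sa_def per3 alpha2' field_simps) (simp add: phi_expl algebra_simps power2_eq_square)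
  next
    case 5 then show ?thesis using n(2) unfolding h2 by (simp add: Fpp_expl sa_def per3 alpha2' field_simps) (simp add: phi_expl algebra_simps power2_eq_square)
  next
    case 6 then show ?thesis using n(2) unfolding h2 by (simp add: Fpp_expl sa_def per3 alpha2' field_simps) (simp add: phi_expl algebra_simps power2_eq_square)
  next
    case 7 then show ?thesis using n(3) unfolding h2 by (simp add: Fpp_expl sa_def per3 alpha2' field_simps) (simp add: phi_expl algebra_simps power2_eq_square)
  next
    case 8 then show ?thesis using n(3) unfolding h2 by (simp add: Fpp_expl sa_def per3 alpha2' field_simps) (simp add: phi_expl algebra_simps power2_eq_square)
  next
    case 9 then show ?thesis using n(3) unfolding h2 by (simp add: Fpp_expl sa_def per3 alpha2' field_simps) (simp add: phi_expl algebra_simps power2_eq_square)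
  qed
qed

lemma D_DSg: "D (D (Sg i)) = Sg i * ((Fp i + alpha i / phi i)^2 + Fpp i - alpha i * (phi i * (phi (i+2) - phi (i+1)) + alpha i) / (phi i)^2)"
  using phi_nz[of i] Sg_nz[of i]
  by (simp add: D_Sg D_mult D_add D_div D_Fp D_phi field_simps power2_eq_square)

lemma DC_s: assumes i: "i < 3" shows "DC (s i)"
proof (rule DC_intro'[OF FH_s[OF i]])
  note H = H_simps[OF FH_s[OF i]]
  show "s i 0 = D (s i (alpha 0))" "s i 0 = D (s i (alpha 1))" "s i 1 = D (s i xL)"
    by (simp_all add: H s_alpha[OF i] s_xL[OF i] sa_def D_minus D_add)
  fix k :: nat assume k: "k < 3"
  show "s i (taup k) = D (s i (tau k))" by (simp add: s_tau[OF i] s_taup[OF i])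
  show "s i (tau k * (Fpp k + (Fp k)^2)) = D (s i (taup k))"
  proof (cases "k = i")
    case True
    have key: "s i (Fpp i) + (Fp i + alpha i / phi i)^2 = (Fp i + alpha i / phi i)^2 + Fpp i - alpha i * (phi i * (phi (i+2) - phi (i+1)) + alpha i) / (phi i)^2"
      unfolding s_Fpp[OF i i] using phi_nz[of i] by (simp add: field_simps power2_eq_square)
    have L: "s i (tau i * (Fpp i + (Fp i)^2)) = Sg i * (s i (Fpp i) + (Fp i + alpha i / phi i)^2)"
      by (simp add: H s_tau[OF i] s_Fp[OF i] st_def)
    have R: "D (s i (taup i)) = Sg i * ((Fp i + alpha i / phi i)^2 + Fpp i - alpha i * (phi i * (phi (i+2) - phi (i+1)) + alpha i) / (phi i)^2)"
      by (simp add: s_taup[OF i] st_def D_DSg)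
    show ?thesis unfolding True L R key ..
  next
    case False
    then have "k mod 3 \<noteq> i mod 3" using i k by simp
    then show ?thesis using False
      by (simp add: H s_tau[OF i] s_taup[OF i] s_Fp[OF i] s_Fpp[OF i k] st_def D_taup D_tau)
  qed
qed


lemma FH_s0: "FH (s 0)" and FH_s1: "FH (s 1)" and FH_s2: "FH (s 2)" by (simp_all add: FH_s)
lemma DC_s0: "DC (s 0)" and DC_s1: "DC (s 1)" and DC_s2: "DC (s 2)" by (simp_all add: DC_s)

lemma s_Sg: "i < 3 \<Longrightarrow> s i (Sg i) = tau i" by (simp add: s_ext E_Sg)

lemma s_phi: assumes "i < 3"
  shows "s i (phi i) = phi i" "s i (phi (i+1)) = phi (i+1) - alpha i / phi i" "s i (phi (i+2)) = phi (i+2) + alpha i / phi i"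
proof -
  note H = H_simps[OF FH_s[OF assms]]
  have m: "(i+1) mod 3 \<noteq> i mod 3" "(i+2) mod 3 \<noteq> i mod 3" by presburger+
  show "s i (phi i) = phi i" unfolding phi_Fp[of i] using m by (simp add: H s_xL[OF assms] s_Fp[OF assms])
  show "s i (phi (i+1)) = phi (i+1) - alpha i / phi i" unfolding p1 using m by (simp add: H s_xL[OF assms] s_Fp[OF assms])
  show "s i (phi (i+2)) = phi (i+2) + alpha i / phi i" unfolding p2 using m by (simp add: H s_xL[OF assms] s_Fp[OF assms])
qed

lemma s_phi_expl:
  "s 0 (phi 0) = phi 0" "s 0 (phi 1) = phi 1 - alpha 0 / phi 0" "s 0 (phi 2) = phi 2 + alpha 0 / phi 0"
  "s 1 (phi 1) = phi 1" "s 1 (phi 2) = phi 2 - alpha 1 / phi 1" "s 1 (phi 0) = phi 0 + alpha 1 / phi 1"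
  "s 2 (phi 2) = phi 2" "s 2 (phi 0) = phi 0 - alpha 2 / phi 2" "s 2 (phi 1) = phi 1 + alpha 2 / phi 2"
  using s_phi[of 0] s_phi[of 1] s_phi[of 2] by (simp_all add: per3)

lemma s_tau_expl:
  "s 0 (tau 0) = Sg 0" "s 0 (tau 1) = tau 1" "s 0 (tau 2) = tau 2"
  "s 1 (tau 0) = tau 0" "s 1 (tau 1) = Sg 1" "s 1 (tau 2) = tau 2"
  "s 2 (tau 0) = tau 0" "s 2 (tau 1) = tau 1" "s 2 (tau 2) = Sg 2"
  by (simp_all add: s_tau st_def)

lemma s_alpha_expl:
  "s 0 (alpha 0) = - alpha 0" "s 0 (alpha 1) = alpha 1 + alpha 0" "s 0 (alpha 2) = alpha 2 + alpha 0"
  "s 1 (alpha 0) = alpha 0 + alpha 1" "s 1 (alpha 1) = - alpha 1" "s 1 (alpha 2) = alpha 2 + alpha 1"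
  "s 2 (alpha 0) = alpha 0 + alpha 2" "s 2 (alpha 1) = alpha 1 + alpha 2" "s 2 (alpha 2) = - alpha 2"
  by (simp_all add: s_alpha sa_def)

lemma s_xL_expl: "s 0 xL = xL" "s 1 xL = xL" "s 2 xL = xL" by (simp_all add: s_xL)

lemma Sg_expl: "Sg 0 = tau 1 * tau 2 * phi 0 / tau 0" "Sg 1 = tau 2 * tau 0 * phi 1 / tau 1"
  "Sg 2 = tau 0 * tau 1 * phi 2 / tau 2"
  by (simp_all add: Sg_eq per3)

lemma ss_inv: assumes "i < 3" shows "s i \<circ> s i = id"
proof (rule hom_ext)
  show "FH (s i \<circ> s i)" "FH id" "DC (s i \<circ> s i)" "DC id"
    by (simp_all add: FH_comp FH_s DC_comp DC_s assms FH_id DC_id)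
  show "(s i \<circ> s i) (alpha 0) = id (alpha 0)" "(s i \<circ> s i) (alpha 1) = id (alpha 1)"
    "(s i \<circ> s i) xL = id xL" "(s i \<circ> s i) (tau 0) = id (tau 0)" "(s i \<circ> s i) (tau 1) = id (tau 1)"
    "(s i \<circ> s i) (tau 2) = id (tau 2)"
    using i3[OF assms] s_Sg[of 0] s_Sg[of 1] s_Sg[of 2]
    by (auto simp: s_alpha_expl s_tau_expl s_xL_expl H_simps[OF FH_s0] H_simps[OF FH_s1] H_simps[OF FH_s2])
qed

lemma ss_inv': "i < 3 \<Longrightarrow> s i (s i f) = f"
  using ss_inv[of i] by (metis comp_apply id_apply)

lemma pi_Sg: "pi (Sg i) = Sg (i+1)"
  by (simp add: Sg_eq H_simps[OF FH_pi] pi_tau pi_phi)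

lemma Sg3: "Sg 3 = Sg 0" by (simp add: Sg_eq per3)

lemma pi_expl: "pi (tau 0) = tau 1" "pi (tau 1) = tau 2" "pi (tau 2) = tau 0"
  "pi (alpha 0) = alpha 1" "pi (alpha 1) = alpha 2" "pi (alpha 2) = alpha 0"
  "pi (Sg 0) = Sg 1" "pi (Sg 1) = Sg 2" "pi (Sg 2) = Sg 0"
  by (simp_all add: pi_tau pi_alpha pi_Sg per3 Sg3)


lemmas Hall = H_simps[OF FH_s0] H_simps[OF FH_s1] H_simps[OF FH_s2] H_simps[OF FH_pi]
lemmas vals = s_alpha_expl s_tau_expl s_xL_expl pi_expl pi_xL

lemma pi_s0: "pi \<circ> s 0 = s 1 \<circ> pi"
  by (rule hom_ext) (simp_all add: FH_comp FH_s0 FH_s1 FH_pi DC_comp DC_s0 DC_s1 DC_pi Hall vals)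
lemma pi_s1: "pi \<circ> s 1 = s 2 \<circ> pi"
  by (rule hom_ext) (simp_all add: FH_comp FH_s2 FH_s1 FH_pi DC_comp DC_s2 DC_s1 DC_pi Hall vals)
lemma pi_s2: "pi \<circ> s 2 = s 0 \<circ> pi"
  by (rule hom_ext) (simp_all add: FH_comp FH_s2 FH_s0 FH_pi DC_comp DC_s2 DC_s0 DC_pi Hall vals)
lemma pi3: "pi \<circ> pi \<circ> pi = id"
  by (rule hom_ext) (simp_all add: FH_comp FH_pi FH_id DC_comp DC_pi DC_id Hall vals)

lemma alg1:
  fixes t0 t1 t2 p0 p1 a0 a1 q :: "'a::field"
  assumes "t0 \<noteq> 0" "t1 \<noteq> 0" "t2 \<noteq> 0" "p0 \<noteq> 0" "p1 \<noteq> 0" "q \<noteq> 0" and h: "q * p0 = p1 * p0 - a0"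
  shows "(t2 * (t1 * t2 * p0 / t0) * q / t1) * t2 * (p0 + (a1 + a0) / q) / (t1 * t2 * p0 / t0)
       = (t2 * t0 * p1 / t1) * t2 * (p0 + a1 / p1) / t0"
proof -
  have "(t2 * (t1 * t2 * p0 / t0) * q / t1) * t2 * (p0 + (a1 + a0) / q) / (t1 * t2 * p0 / t0)
      = t2 * t2 * (q * p0 + (a1 + a0)) / t1"
    using assms by (simp add: field_simps)
  also have "\<dots> = t2 * t2 * (p1 * p0 + a1) / t1" unfolding h by (simp add: algebra_simps)
  also have "\<dots> = (t2 * t0 * p1 / t1) * t2 * (p0 + a1 / p1) / t0" using assms by (simp add: field_simps)
  finally show ?thesis .
qed

lemma alg2:
  fixes t0 t1 t2 p0 p1 a0 a1 r :: "'a::field"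
  assumes "t0 \<noteq> 0" "t1 \<noteq> 0" "t2 \<noteq> 0" "p0 \<noteq> 0" "p1 \<noteq> 0" "r \<noteq> 0" and h: "r * p1 = p0 * p1 + a1"
  shows "t2 * (t1 * t2 * p0 / t0) * (p1 - a0 / p0) / t1
       = t2 * ((t2 * t0 * p1 / t1) * t2 * r / t0) * (p1 - (a0 + a1) / r) / (t2 * t0 * p1 / t1)"
proof -
  have "t2 * ((t2 * t0 * p1 / t1) * t2 * r / t0) * (p1 - (a0 + a1) / r) / (t2 * t0 * p1 / t1)
      = t2 * t2 * (r * p1 - (a0 + a1)) / t0"
    using assms by (simp add: field_simps)
  also have "\<dots> = t2 * t2 * (p0 * p1 - a0) / t0" unfolding h by (simp add: algebra_simps)
  also have "\<dots> = t2 * (t1 * t2 * p0 / t0) * (p1 - a0 / p0) / t1" using assms by (simp add: field_simps)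
  finally show ?thesis by simp
qed

lemma sA: "s 1 (Sg 0) = Sg 1 * tau 2 * (phi 0 + alpha 1 / phi 1) / tau 0"
  unfolding Sg_expl(1) by (simp add: Hall vals s_phi_expl)
lemma sB: "s 0 (Sg 1) = tau 2 * Sg 0 * (phi 1 - alpha 0 / phi 0) / tau 1"
  unfolding Sg_expl(2) by (simp add: Hall vals s_phi_expl)

lemma s0phi1_nz: "phi 1 - alpha 0 / phi 0 \<noteq> 0"
  using H_nz[OF FH_s0 phi_nz[of 1]] by (simp add: s_phi_expl)
lemma s1phi0_nz: "phi 0 + alpha 1 / phi 1 \<noteq> 0"
  using H_nz[OF FH_s1 phi_nz[of 0]] by (simp add: s_phi_expl)

lemma braid: "s 0 \<circ> s 1 \<circ> s 0 = s 1 \<circ> s 0 \<circ> s 1"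
proof (rule hom_ext)
  show "FH (s 0 \<circ> s 1 \<circ> s 0)" "FH (s 1 \<circ> s 0 \<circ> s 1)" "DC (s 0 \<circ> s 1 \<circ> s 0)" "DC (s 1 \<circ> s 0 \<circ> s 1)"
    by (simp_all add: FH_comp FH_s0 FH_s1 DC_comp DC_s0 DC_s1)
  show "(s 0 \<circ> s 1 \<circ> s 0) (alpha 0) = (s 1 \<circ> s 0 \<circ> s 1) (alpha 0)"
    "(s 0 \<circ> s 1 \<circ> s 0) (alpha 1) = (s 1 \<circ> s 0 \<circ> s 1) (alpha 1)"
    "(s 0 \<circ> s 1 \<circ> s 0) xL = (s 1 \<circ> s 0 \<circ> s 1) xL"
    "(s 0 \<circ> s 1 \<circ> s 0) (tau 2) = (s 1 \<circ> s 0 \<circ> s 1) (tau 2)"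
    by (simp_all add: Hall vals)
  have n: "tau 0 \<noteq> 0" "tau 1 \<noteq> 0" "tau 2 \<noteq> 0" "phi 0 \<noteq> 0" "phi 1 \<noteq> 0" by (simp_all add: tau_nz phi_nz)
  have L0: "(s 0 \<circ> s 1 \<circ> s 0) (tau 0) = s 0 (Sg 1) * tau 2 * (phi 0 + (alpha 1 + alpha 0) / (phi 1 - alpha 0 / phi 0)) / Sg 0"
    by (simp add: vals sA Hall s_phi_expl)
  have R0: "(s 1 \<circ> s 0 \<circ> s 1) (tau 0) = Sg 1 * tau 2 * (phi 0 + alpha 1 / phi 1) / tau 0"
    by (simp add: vals sA)
  show "(s 0 \<circ> s 1 \<circ> s 0) (tau 0) = (s 1 \<circ> s 0 \<circ> s 1) (tau 0)"
    unfolding L0 R0 sB unfolding Sg_expl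
    by (rule alg1[OF n s0phi1_nz]) (use n(4) in \<open>simp add: field_simps\<close>)
  have L1: "(s 0 \<circ> s 1 \<circ> s 0) (tau 1) = tau 2 * Sg 0 * (phi 1 - alpha 0 / phi 0) / tau 1"
    by (simp add: vals sB)
  have R1: "(s 1 \<circ> s 0 \<circ> s 1) (tau 1) = tau 2 * s 1 (Sg 0) * (phi 1 - (alpha 0 + alpha 1) / (phi 0 + alpha 1 / phi 1)) / Sg 1"
    by (simp add: vals sB Hall s_phi_expl)
  show "(s 0 \<circ> s 1 \<circ> s 0) (tau 1) = (s 1 \<circ> s 0 \<circ> s 1) (tau 1)"
    unfolding L1 R1 sA unfolding Sg_expl
    by (rule alg2[OF n s1phi0_nz]) (use n(5) in \<open>simp add: field_simps\<close>)
qed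


definition zp :: "(L \<Rightarrow> L) \<Rightarrow> (L \<Rightarrow> L) \<Rightarrow> int \<Rightarrow> L \<Rightarrow> L" where
  "zp f g k = (if 0 \<le> k then f ^^ nat k else g ^^ nat (- k))"

locale invpair =
  fixes f g :: "L \<Rightarrow> L"
  assumes gf: "\<And>x. g (f x) = x" and fg: "\<And>x. f (g x) = x"
begin

lemma inv_f: "inv f = g"
  by (rule inv_unique_comp) (simp_all add: fun_eq_iff gf fg)

lemma zpow_zp: "zpow f k = zp f g k"
  by (simp add: zpow_def zp_def inv_f)

lemma Z1: "zp f g (k+1) x = zp f g k (f x)"
proof -
  consider "0 \<le> k" | "k = -1" | "k < -1" by linarith
  then show ?thesis
  proof cases
    case 1
    then have "nat (k+1) = Suc (nat k)" by simp
    then show ?thesis using 1 by (simp add: zp_def funpow_Suc_right del: funpow.simps)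
  next
    case 2 then show ?thesis by (simp add: zp_def gf)
  next
    case 3
    then have "nat (- k) = Suc (nat (- (k+1)))" by simp
    then show ?thesis using 3 by (simp add: zp_def funpow_Suc_right gf del: funpow.simps)
  qed
qed

lemma Z2: "zp f g (k+1) x = f (zp f g k x)"
proof -
  consider "0 \<le> k" | "k = -1" | "k < -1" by linarith
  then show ?thesis
  proof cases
    case 1
    then have "nat (k+1) = Suc (nat k)" by simp
    then show ?thesis using 1 by (simp add: zp_def)
  next
    case 2 then show ?thesis by (simp add: zp_def fg)
  next
    case 3
    then have "nat (- k) = Suc (nat (- (k+1)))" by simp
    then show ?thesis using 3 by (simp add: zp_def fg)
  qed
qed

lemma Z4: "zp f g k (g x) = zp f g (k - 1) x"
  using Z1[of "k-1" "g x"] by (simp add: fg)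

lemma Z3: assumes "\<And>x. f (h x) = h (f x)" "\<And>x. g (h x) = h (g x)"
  shows "zp f g k (h x) = h (zp f g k x)"
proof -
  have "(F ^^ n) (h x) = h ((F ^^ n) x)" if "\<And>x. F (h x) = h (F x)" for F n
    by (induct n) (simp_all add: that)
  then show ?thesis using assms by (simp add: zp_def)
qed

lemma FH_zp: "FH f \<Longrightarrow> FH g \<Longrightarrow> FH (zp f g k)"
  by (simp add: zp_def FH_funpow)

lemma zp_affine: assumes "FH f" "FH g" "f y = y + of_int d"
  shows "zp f g k y = y + of_int k * of_int d"
proof (induct k rule: int_induct[where k=0])
  case base then show ?case by (simp add: zp_def)
next
  case (step1 i)
  have "zp f g (i+1) y = f (y + of_int i * of_int d)" by (simp add: Z2 step1)
  also have "\<dots> = y + of_int (i+1) * of_int d"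
    using assms by (simp add: H_simps[OF assms(1)] algebra_simps)
  finally show ?case .
next
  case (step2 i)
  have "f (zp f g (i - 1) y) = y + of_int i * of_int d" using Z2[of "i-1" y] step2 by simp
  also have "\<dots> = f (y + of_int (i - 1) * of_int d)"
    using assms by (simp add: H_simps[OF assms(1)] algebra_simps)
  finally have "g (f (zp f g (i - 1) y)) = g (f (y + of_int (i - 1) * of_int d))" by simp
  then show ?case by (simp add: gf)
qed

end

lemma P0: "pi (s 0 x) = s 1 (pi x)" using pi_s0 by (metis comp_apply)
lemma P1: "pi (s 1 x) = s 2 (pi x)" using pi_s1 by (metis comp_apply)
lemma P2: "pi (s 2 x) = s 0 (pi x)" using pi_s2 by (metis comp_apply)
lemma I0: "s 0 (s 0 x) = x" and I1: "s 1 (s 1 x) = x" and I2: "s 2 (s 2 x) = x" by (simp_all add: ss_inv')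
lemma PPP: "pi (pi (pi x)) = x" using pi3 by (metis comp_apply id_apply)
lemma B: "s 1 (s 0 (s 1 x)) = s 0 (s 1 (s 0 x))" using braid by (metis comp_apply)

definition T1i :: "L \<Rightarrow> L" where "T1i = s 1 \<circ> s 2 \<circ> pi \<circ> pi"
definition T2i :: "L \<Rightarrow> L" where "T2i = s 2 \<circ> pi \<circ> pi \<circ> s 1"

lemma ip1: "invpair Tr1 T1i"
  by unfold_locales (simp_all add: Tr1_def T1i_def I1 I2 PPP)
lemma ip2: "invpair Tr2 T2i"
  by unfold_locales (simp_all add: Tr2_def T2i_def I1 I2 PPP)

lemma T12: "Tr1 (Tr2 x) = Tr2 (Tr1 x)"
  by (simp add: Tr1_def Tr2_def P0 P1 P2 I0 I1 I2 B)

lemma T1i_T2: "T1i (Tr2 x) = Tr2 (T1i x)"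
proof -
  have "T1i (Tr2 (Tr1 (T1i x))) = T1i (Tr1 (Tr2 (T1i x)))" by (simp add: T12)
  then show ?thesis using invpair.gf[OF ip1] invpair.fg[OF ip1] by simp
qed
lemma T2i_T1: "T2i (Tr1 x) = Tr1 (T2i x)"
proof -
  have "T2i (Tr1 (Tr2 (T2i x))) = T2i (Tr2 (Tr1 (T2i x)))" by (simp add: T12)
  then show ?thesis using invpair.gf[OF ip2] invpair.fg[OF ip2] by simp
qed

lemma FH_Tr1: "FH Tr1" unfolding Tr1_def by (intro FH_comp FH_pi FH_s0 FH_s1 FH_s2)
lemma FH_Tr2: "FH Tr2" unfolding Tr2_def by (intro FH_comp FH_pi FH_s0 FH_s1 FH_s2)
lemma FH_T1i: "FH T1i" unfolding T1i_def by (intro FH_comp FH_pi FH_s0 FH_s1 FH_s2)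
lemma FH_T2i: "FH T2i" unfolding T2i_def by (intro FH_comp FH_pi FH_s0 FH_s1 FH_s2)

lemma wmn_eq: "wmn m n x = zp Tr1 T1i m (zp Tr2 T2i n x)"
  by (simp add: wmn_def invpair.zpow_zp[OF ip1] invpair.zpow_zp[OF ip2])

lemma taumn_eq: "taumn m n = zp Tr1 T1i m (zp Tr2 T2i n (tau 0))"
  by (simp add: taumn_def wmn_eq)

lemma FH_w: "FH (wmn m n)"
proof -
  have "wmn m n = zp Tr1 T1i m \<circ> zp Tr2 T2i n" by (simp add: fun_eq_iff wmn_eq)
  then show ?thesis
    by (simp add: FH_comp invpair.FH_zp[OF ip1] invpair.FH_zp[OF ip2] FH_Tr1 FH_Tr2 FH_T1i FH_T2i)
qed

lemma Tr1_tau0: "Tr1 (tau 0) = tau 1" by (simp add: Tr1_def vals)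
lemma Tr2_tau1: "Tr2 (tau 1) = tau 2" by (simp add: Tr2_def vals)
lemma Tr2_tau0: "Tr2 (tau 0) = Sg 1" by (simp add: Tr2_def vals)
lemma tau2_eq: "tau 2 = Tr1 (Tr2 (tau 0))" by (simp add: T12 Tr1_tau0 Tr2_tau1)
lemma Sg0_eq: "Sg 0 = Tr1 (tau 2)" by (simp add: Tr1_def vals)
lemma Sg2_eq: "Sg 2 = T2i (tau 0)" by (simp add: T2i_def vals)
lemma s1Sg0: "s 1 (Sg 0) = Tr2 (tau 2)" by (simp add: Tr2_def vals)
lemma s1Sg2: "s 1 (Sg 2) = T1i (tau 0)" by (simp add: T1i_def vals)


abbreviation W :: "int \<Rightarrow> int \<Rightarrow> L \<Rightarrow> L" where "W m n x \<equiv> zp Tr1 T1i m (zp Tr2 T2i n x)"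

lemma T1i_T2i: "T2i (T1i y) = T1i (T2i y)"
proof -
  have "T1i y = Tr2 (T1i (T2i y))" using T1i_T2[of "T2i y"] invpair.fg[OF ip2] by simp
  then have "T2i (T1i y) = T2i (Tr2 (T1i (T2i y)))" by simp
  then show ?thesis using invpair.gf[OF ip2] by simp
qed

lemma zp2_T1: "zp Tr2 T2i n (Tr1 x) = Tr1 (zp Tr2 T2i n x)"
  by (rule invpair.Z3[OF ip2]) (simp_all add: T12 T2i_T1)
lemma zp2_T1i: "zp Tr2 T2i n (T1i x) = T1i (zp Tr2 T2i n x)"
  by (rule invpair.Z3[OF ip2]) (simp_all add: T1i_T2 T1i_T2i)

lemma W_T1: "W m n (Tr1 x) = W (m+1) n x"
  by (simp add: zp2_T1 invpair.Z1[OF ip1])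
lemma W_T2: "W m n (Tr2 x) = W m (n+1) x"
  by (simp add: invpair.Z1[OF ip2])
lemma W_T2i: "W m n (T2i x) = W m (n-1) x"
  by (simp add: invpair.Z4[OF ip2])
lemma W_T1i: "W m n (T1i x) = W (m-1) n x"
  by (simp add: zp2_T1i invpair.Z4[OF ip1])

lemma w_eq: "wmn m n x = W m n x" by (simp add: wmn_eq)
lemma tmn: "taumn m n = W m n (tau 0)" by (simp add: taumn_eq)

lemma w_tau0: "wmn m n (tau 0) = taumn m n" by (simp add: w_eq tmn)
lemma w_tau1: "wmn m n (tau 1) = taumn (m+1) n"
  by (simp add: w_eq tmn Tr1_tau0[symmetric] W_T1 del: Tr1_tau0)
lemma w_tau2: "wmn m n (tau 2) = taumn (m+1) (n+1)"
  unfolding w_eq tmn tau2_eq by (simp add: W_T1 W_T2)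
lemma w_Sg0: "wmn m n (Sg 0) = taumn (m+2) (n+1)"
  unfolding w_eq tmn Sg0_eq tau2_eq by (simp add: W_T1 W_T2 ac_simps)
lemma w_Sg1: "wmn m n (Sg 1) = taumn m (n+1)"
  unfolding w_eq tmn Tr2_tau0[symmetric] by (simp add: W_T2)
lemma w_Sg2: "wmn m n (Sg 2) = taumn m (n-1)"
  unfolding w_eq tmn Sg2_eq by (simp add: W_T2i)
lemma w_s1Sg0: "wmn m n (s 1 (Sg 0)) = taumn (m+1) (n+2)"
  unfolding w_eq tmn s1Sg0 tau2_eq by (simp add: W_T1 W_T2 ac_simps)
lemma w_s1Sg2: "wmn m n (s 1 (Sg 2)) = taumn (m-1) n"
  unfolding w_eq tmn s1Sg2 by (simp add: W_T1i)

lemma phi_Sg: "phi 0 = Sg 0 * tau 0 / (tau 1 * tau 2)" "phi 1 = Sg 1 * tau 1 / (tau 2 * tau 0)"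
  "phi 2 = Sg 2 * tau 2 / (tau 0 * tau 1)"
  using tau_nz[of 0] tau_nz[of 1] tau_nz[of 2] by (simp_all add: Sg_expl field_simps)

lemma s1_phi_Sg: "s 1 (phi 0) = s 1 (Sg 0) * tau 0 / (Sg 1 * tau 2)"
  "s 1 (phi 1) = tau 1 * Sg 1 / (tau 2 * tau 0)"
  "s 1 (phi 2) = s 1 (Sg 2) * tau 2 / (tau 0 * Sg 1)"
proof -
  have "s 1 (Sg 1) = tau 1" using s_tau_expl(5) I1[of "tau 1"] by simp
  then show "s 1 (phi 0) = s 1 (Sg 0) * tau 0 / (Sg 1 * tau 2)"
    "s 1 (phi 1) = tau 1 * Sg 1 / (tau 2 * tau 0)"
    "s 1 (phi 2) = s 1 (Sg 2) * tau 2 / (tau 0 * Sg 1)"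
    unfolding phi_Sg by (simp_all add: Hall vals)
qed

lemma Tr_alpha:
  "Tr1 (alpha 0) = alpha 0 + of_int 3" "Tr1 (alpha 1) = alpha 1 + of_int (-3)" "Tr1 (alpha 2) = alpha 2 + of_int 0"
  "Tr2 (alpha 0) = alpha 0 + of_int 0" "Tr2 (alpha 1) = alpha 1 + of_int 3" "Tr2 (alpha 2) = alpha 2 + of_int (-3)"
  by (simp_all add: Tr1_def Tr2_def Hall vals alpha2' algebra_simps)

lemma zp1_alpha: "zp Tr1 T1i k (alpha 0) = alpha 0 + of_int k * of_int 3"
  "zp Tr1 T1i k (alpha 1) = alpha 1 + of_int k * of_int (-3)"
  "zp Tr1 T1i k (alpha 2) = alpha 2 + of_int k * of_int 0"
  by (rule invpair.zp_affine[OF ip1 FH_Tr1 FH_T1i]; simp add: Tr_alpha)+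
lemma zp2_alpha: "zp Tr2 T2i k (alpha 0) = alpha 0 + of_int k * of_int 0"
  "zp Tr2 T2i k (alpha 1) = alpha 1 + of_int k * of_int 3"
  "zp Tr2 T2i k (alpha 2) = alpha 2 + of_int k * of_int (-3)"
  by (rule invpair.zp_affine[OF ip2 FH_Tr2 FH_T2i]; simp add: Tr_alpha)+

lemma FH_zp1: "FH (zp Tr1 T1i m)" by (rule invpair.FH_zp[OF ip1 FH_Tr1 FH_T1i])

lemma w_alpha: "wmn m n (alpha 0) = alpha 0 + 3 * of_int m"
  "wmn m n (alpha 1) = alpha 1 + 3 * of_int (n - m)"
  "wmn m n (alpha 2) = alpha 2 - 3 * of_int n"
  by (simp_all add: w_eq zp2_alpha H_simps[OF FH_zp1] zp1_alpha algebra_simps)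

theorem proposition4p1:
  fixes m n :: int
  defines "w \<equiv> wmn m n" and "w' \<equiv> wmn m n \<circ> s 1"
  shows "(w (tau 0), w (tau 1), w (tau 2)) = (taumn m n, taumn (m+1) n, taumn (m+1) (n+1))
    \<and> (w (alpha 0), w (alpha 1), w (alpha 2))
        = (alpha 0 + 3 * of_int m, alpha 1 + 3 * of_int (n - m), alpha 2 - 3 * of_int n)
    \<and> (w' (tau 0), w' (tau 1), w' (tau 2)) = (taumn m n, taumn m (n+1), taumn (m+1) (n+1))
    \<and> (w' (alpha 0), w' (alpha 1), w' (alpha 2))
        = (alpha 0 + alpha 1 + 3 * of_int n, - alpha 1 + 3 * of_int (m - n),
           alpha 1 + alpha 2 - 3 * of_int m)
    \<and> (w (phi 0), w (phi 1), w (phi 2))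
        = (taumn m n * taumn (m+2) (n+1) / (taumn (m+1) n * taumn (m+1) (n+1)),
           taumn (m+1) n * taumn m (n+1) / (taumn (m+1) (n+1) * taumn m n),
           taumn (m+1) (n+1) * taumn m (n-1) / (taumn m n * taumn (m+1) n))
    \<and> (w' (phi 0), w' (phi 1), w' (phi 2))
        = (taumn m n * taumn (m+1) (n+2) / (taumn m (n+1) * taumn (m+1) (n+1)),
           taumn m (n+1) * taumn (m+1) n / (taumn (m+1) (n+1) * taumn m n),
           taumn (m+1) (n+1) * taumn (m-1) n / (taumn m n * taumn m (n+1)))"
proof -
  note H = H_simps[OF FH_w[of m n]]
  have a: "(w (tau 0), w (tau 1), w (tau 2)) = (taumn m n, taumn (m+1) n, taumn (m+1) (n+1))"
    unfolding w_def by (simp add: w_tau0 w_tau1 w_tau2)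
  have b: "(w (alpha 0), w (alpha 1), w (alpha 2))
        = (alpha 0 + 3 * of_int m, alpha 1 + 3 * of_int (n - m), alpha 2 - 3 * of_int n)"
    unfolding w_def by (simp add: w_alpha)
  have c: "(w' (tau 0), w' (tau 1), w' (tau 2)) = (taumn m n, taumn m (n+1), taumn (m+1) (n+1))"
    unfolding w'_def by (simp add: vals w_tau0 w_tau2 w_Sg1)
  have d: "(w' (alpha 0), w' (alpha 1), w' (alpha 2))
        = (alpha 0 + alpha 1 + 3 * of_int n, - alpha 1 + 3 * of_int (m - n),
           alpha 1 + alpha 2 - 3 * of_int m)"
    unfolding w'_def by (simp add: vals H w_alpha algebra_simps)
  have e: "(w (phi 0), w (phi 1), w (phi 2))
        = (taumn m n * taumn (m+2) (n+1) / (taumn (m+1) n * taumn (m+1) (n+1)),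
           taumn (m+1) n * taumn m (n+1) / (taumn (m+1) (n+1) * taumn m n),
           taumn (m+1) (n+1) * taumn m (n-1) / (taumn m n * taumn (m+1) n))"
    unfolding w_def phi_Sg by (simp add: H w_tau0 w_tau1 w_tau2 w_Sg0 w_Sg1 w_Sg2 mult.commute)
  have f: "(w' (phi 0), w' (phi 1), w' (phi 2))
        = (taumn m n * taumn (m+1) (n+2) / (taumn m (n+1) * taumn (m+1) (n+1)),
           taumn m (n+1) * taumn (m+1) n / (taumn (m+1) (n+1) * taumn m n),
           taumn (m+1) (n+1) * taumn (m-1) n / (taumn m n * taumn m (n+1)))"
    unfolding w'_def comp_apply s1_phi_Sg
    by (simp add: H w_tau0 w_tau1 w_tau2 w_Sg1 w_s1Sg0 w_s1Sg2 mult.commute)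
  show ?thesis using a b c d e f by blast
qed


end
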